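(* Let $I=(i_1,\ldots,i_r)$ be a composition of $n$ and $V'_I=V_{\overline{I}^{\sim}}$. Then $$V'_I=\sum_{k=i_r}^{n}(-1)^{k-i_r}\binom{k-1}{i_r-1}\,V'_{I[n-k]}\,V'_{(k)}.$$
   Context: Permutations are words. A word $a_1\cdots a_m$ is initially dominated if $a_1>a_j$ for all $j\ge2$; every permutation factors uniquely as $\sigma=u_1\cdots u_r$ into initially dominated words with increasing first letters, and $\mathrm{SC}(\sigma)=(|u_1|,\ldots,|u_r|)$. For a composition $I$ of $n$ with descent set $\mathrm{Des}(I)=\{i_1,\ldots,i_1+\cdots+i_{r-1}\}$, $\overline{I}^{\sim}$ is the composition of $n$ with descent set $\{1,\ldots,n-1\}\setminus\mathrm{Des}(I)$. $\mathrm{RC}(\sigma)$ is the composition with descent set $\{i: i+1\text{ is left of } i\text{ in }\sigma\}$. In $QSym$ (fundamental basis $F_I$) let $U_J=\sum_{\mathrm{SC}(\sigma)=\overline{J}^{\sim}}F_{\mathrm{RC}(\sigma)}$, a basis. $\mathbf{Sym}$ is the algebra of noncommutative symmetric functions with ribbon basis $R_I$, dual to $QSym$ via $\langle F_I,R_J\rangle=\delta_{IJ}$; $(V_I)$ is the basis dual to $(U_I)$. For $0\le m\le n$, $I[m]$ is the composition of $m$ whose ribbon diagram consists of the first $m$ boxes of that of $I$ ($I[0]$ empty, with $V'_{\emptyset}=1$). *)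

theory Defs
  imports Complex_Main
begin

type_synonym comp = "nat list"

definition is_comp :: "comp \<Rightarrow> bool" where
  "is_comp I \<longleftrightarrow> 0 \<notin> set I"

definition comps :: "nat \<Rightarrow> comp set" where
  "comps n = {I. is_comp I \<and> sum_list I = n}"

definition des_set :: "comp \<Rightarrow> nat set" where
  "des_set I = {sum_list (take k I) | k. 0 < k \<and> k < length I}"

definition comp_of_des :: "nat \<Rightarrow> nat set \<Rightarrow> comp" where
  "comp_of_des n D = (THE I. I \<in> comps n \<and> des_set I = D)"

definition conjc :: "comp \<Rightarrow> comp" where
  "conjc I = comp_of_des (sum_list I) ({1..<sum_list I} - des_set I)"

definition perms :: "nat \<Rightarrow> nat list set" where
  "perms n = {s. distinct s \<and> set s = {1..n}}"

definition init_dom :: "nat list \<Rightarrow> bool" where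
  "init_dom u \<longleftrightarrow> u \<noteq> [] \<and> (\<forall>j. 0 < j \<and> j < length u \<longrightarrow> u ! j < u ! 0)"

definition SC :: "nat list \<Rightarrow> comp" where
  "SC s = map length (THE us. concat us = s \<and> (\<forall>u\<in>set us. init_dom u)
                               \<and> sorted_wrt (\<lambda>u v. hd u < hd v) us)"

definition left_of :: "nat \<Rightarrow> nat \<Rightarrow> nat list \<Rightarrow> bool" where
  "left_of x y s \<longleftrightarrow> (\<exists>p q. p < q \<and> q < length s \<and> s ! p = x \<and> s ! q = y)"

definition RC :: "nat list \<Rightarrow> comp" where
  "RC s = comp_of_des (length s) {i. 1 \<le> i \<and> i < length s \<and> left_of (i + 1) i s}"

text \<open>Elements of QSym (coefficients in the fundamental basis F) and of Sym
  (coefficients in the ribbon basis R) are coefficient functions comp => rat.\<close>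
type_synonym sym = "comp \<Rightarrow> rat"

text \<open>Coefficient of F_K in U_J.\<close>
definition Ucoeff :: "comp \<Rightarrow> comp \<Rightarrow> rat" where
  "Ucoeff J K = of_nat (card {s \<in> perms (sum_list J). SC s = conjc J \<and> RC s = K})"

text \<open>V_I: the element of Sym_n dual to U, i.e. <U_J, V_I> = delta_{JI}
  (pairing <F_K, R_L> = delta_{KL}).\<close>
definition V :: "comp \<Rightarrow> sym" where
  "V I = (THE x. (\<forall>K. K \<notin> comps (sum_list I) \<longrightarrow> x K = 0) \<and>
            (\<forall>J \<in> comps (sum_list I).
               (\<Sum>K \<in> comps (sum_list I). Ucoeff J K * x K) = (if J = I then 1 else 0)))"

definition R :: "comp \<Rightarrow> sym" where
  "R I = (\<lambda>K. if K = I then 1 else 0)"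

definition Vp :: "comp \<Rightarrow> sym" where
  "Vp I = (if I = [] then R [] else V (conjc I))"

text \<open>Product of ribbons: R_I R_J = R_{I.J} + R_{I|>J}, R_[] = 1.\<close>
definition near_concat :: "comp \<Rightarrow> comp \<Rightarrow> comp" where
  "near_concat I J = butlast I @ [last I + hd J] @ tl J"

definition rmult :: "comp \<Rightarrow> comp \<Rightarrow> sym" where
  "rmult I J = (if I = [] then R J else if J = [] then R I
                else (\<lambda>K. R (I @ J) K + R (near_concat I J) K))"

definition symmult :: "sym \<Rightarrow> sym \<Rightarrow> sym" where
  "symmult a b = (\<lambda>K. \<Sum>(I, J) \<in> {(I, J). is_comp I \<and> is_comp J \<and> sum_list I + sum_list J = sum_list K}.
                        a I * b J * rmult I J K)"

text \<open>I[m]: composition of m formed by the first m boxes of the ribbon of I.\<close>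
fun ribbon_prefix :: "nat \<Rightarrow> comp \<Rightarrow> comp" where
  "ribbon_prefix 0 I = []"
| "ribbon_prefix (Suc m) [] = []"
| "ribbon_prefix (Suc m) (i # I) =
     (if Suc m \<le> i then [Suc m] else i # ribbon_prefix (Suc m - i) I)"

end

theory Submission
  imports Defs "Jordan_Normal_Form.Determinant"
begin


lemma des_set_Nil[simp]: "des_set [] = {}" by (auto simp: des_set_def)
lemma des_set_single[simp]: "des_set [a] = {}" by (auto simp: des_set_def)

lemma des_set_Cons:
  "des_set (a # L) = (if L = [] then {} else insert a ((+) a ` des_set L))"
proof (cases "L = []")
  case True then show ?thesis by simp
next
  case False
  have "des_set (a # L) = insert a ((+) a ` des_set L)"
  proof (intro Set.set_eqI iffI)
    fix x assume "x \<in> des_set (a # L)"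
    then obtain k where k: "0 < k" "k < Suc (length L)" "x = sum_list (take k (a # L))"
      by (auto simp: des_set_def)
    then obtain j where j: "k = Suc j" by (cases k) auto
    show "x \<in> insert a ((+) a ` des_set L)"
    proof (cases "j = 0")
      case True then show ?thesis using k j by simp
    next
      case False
      then have "sum_list (take j L) \<in> des_set L" using k j by (auto simp: des_set_def)
      then show ?thesis using k j by auto
    qed
  next
    fix x assume "x \<in> insert a ((+) a ` des_set L)"
    then show "x \<in> des_set (a # L)"
    proof
      assume "x = a"
      then have "x = sum_list (take 1 (a # L))" by simp
      then show ?thesis using False unfolding des_set_def by (intro CollectI exI[of _ 1]) auto
    next
      assume "x \<in> (+) a ` des_set L"
      then obtain j where "0 < j" "j < length L" "x = a + sum_list (take j L)"
        by (auto simp: des_set_def)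
      then show ?thesis unfolding des_set_def by (intro CollectI exI[of _ "Suc j"]) auto
    qed
  qed
  then show ?thesis using False by simp
qed

lemma is_comp_Cons[simp]: "is_comp (a # L) \<longleftrightarrow> 0 < a \<and> is_comp L"
  by (auto simp: is_comp_def)
lemma is_comp_Nil[simp]: "is_comp []" by (simp add: is_comp_def)
lemma is_comp_append[simp]: "is_comp (A @ B) \<longleftrightarrow> is_comp A \<and> is_comp B"
  by (auto simp: is_comp_def)

lemma comp_sum_pos: "is_comp L \<Longrightarrow> L \<noteq> [] \<Longrightarrow> 0 < sum_list L"
  by (cases L) auto

lemma comp_Nil_iff: "is_comp L \<Longrightarrow> L = [] \<longleftrightarrow> sum_list L = 0"
  by (cases L) auto

lemma comps_Nil[simp]: "comps 0 = {[]}"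
proof -
  have "\<And>L. is_comp L \<Longrightarrow> sum_list L = 0 \<Longrightarrow> L = []" by (case_tac L) auto
  then show ?thesis unfolding comps_def by auto
qed

lemma des_set_sub: "is_comp L \<Longrightarrow> des_set L \<subseteq> {1..<sum_list L}"
proof (induction L)
  case Nil then show ?case by simp
next
  case (Cons a L)
  show ?case
  proof (cases "L = []")
    case True then show ?thesis by simp
  next
    case False
    then have "0 < sum_list L" using Cons.prems comp_sum_pos by simp
    moreover have "des_set L \<subseteq> {1..<sum_list L}" using Cons by simp
    moreover have "0 < a" using Cons.prems by simp
    ultimately show ?thesis using False by (auto simp: des_set_Cons)
  qed
qed

lemma des_set_inj: "is_comp A \<Longrightarrow> is_comp B \<Longrightarrow> sum_list A = sum_list B \<Longrightarrow> des_set A = des_set B \<Longrightarrow> A = B"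
proof (induction A arbitrary: B)
  case Nil then show ?case using comp_Nil_iff by auto
next
  case (Cons a A)
  from Cons.prems obtain b B' where B: "B = b # B'" using comp_Nil_iff
    by (metis comp_sum_pos list.exhaust list.simps(3) less_numeral_extra(3))
  show ?case
  proof (cases "A = []")
    case True
    then have "des_set B' = {} \<or> B' = []" using Cons.prems B by (auto simp: des_set_Cons split: if_splits)
    then have "B' = []" using Cons.prems B True by (auto simp: des_set_Cons split: if_splits)
    then show ?thesis using Cons.prems B True by simp
  next
    case False
    then have "B' \<noteq> []" using Cons.prems B by (auto simp: des_set_Cons split: if_splits)
    have sA: "des_set (a#A) = insert a ((+) a ` des_set A)" using False by (simp add: des_set_Cons)
    have sB: "des_set (b#B') = insert b ((+) b ` des_set B')" using \<open>B' \<noteq> []\<close> by (simp add: des_set_Cons)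
    have "0 < sum_list A" using Cons.prems False comp_sum_pos by auto
    have "0 < sum_list B'" using Cons.prems B \<open>B' \<noteq> []\<close> comp_sum_pos by auto
    have dA: "des_set A \<subseteq> {1..<sum_list A}" using Cons.prems des_set_sub by auto
    have dB: "des_set B' \<subseteq> {1..<sum_list B'}" using Cons.prems B des_set_sub by auto
    have "a = Min (des_set (a#A))" using sA dA
      by (intro Min_eqI[symmetric]) (auto simp: finite_subset[OF dA])
    moreover have "b = Min (des_set (b#B'))" using sB dB
      by (intro Min_eqI[symmetric]) (auto simp: finite_subset[OF dB])
    ultimately have ab: "a = b" using Cons.prems B by simp
    then have "(+) a ` des_set A = (+) a ` des_set B'"
    proof -
      have "des_set (a#A) - {a} = (+) a ` des_set A" using sA dA by auto
      moreover have "des_set (b#B') - {b} = (+) b ` des_set B'" using sB dB by auto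
      ultimately show ?thesis using Cons.prems B ab by simp
    qed
    then have "des_set A = des_set B'" by (simp add: inj_image_eq_iff)
    then have "A = B'" using Cons.IH[of B'] Cons.prems B ab by auto
    then show ?thesis using B ab by simp
  qed
qed

lemma des_set_surj: "D \<subseteq> {1..<n} \<Longrightarrow> \<exists>I. is_comp I \<and> sum_list I = n \<and> des_set I = D"
proof (induction n arbitrary: D rule: less_induct)
  case (less n)
  show ?case
  proof (cases "D = {}")
    case True
    show ?thesis
    proof (cases "n = 0")
      case True then show ?thesis using \<open>D = {}\<close> by (intro exI[of _ "[]"]) auto
    next
      case False then show ?thesis using \<open>D = {}\<close> by (intro exI[of _ "[n]"]) auto
    qed
  next
    case False
    have fin: "finite D" using less.prems finite_subset by blast
    define d where "d = Min D"
    have dD: "d \<in> D" using False fin d_def by auto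
    have dmin: "\<And>x. x \<in> D \<Longrightarrow> d \<le> x" using fin d_def by auto
    have d1: "1 \<le> d" "d < n" using dD less.prems by auto
    define D' where "D' = (\<lambda>x. x - d) ` (D - {d})"
    have "D' \<subseteq> {1..<n - d}"
    proof
      fix y assume "y \<in> D'"
      then obtain x where x: "x \<in> D" "x \<noteq> d" "y = x - d" unfolding D'_def by auto
      then have "d < x" "x < n" using dmin[of x] less.prems by force+
      then show "y \<in> {1..<n - d}" using x by auto
    qed
    then obtain J where J: "is_comp J" "sum_list J = n - d" "des_set J = D'"
      using less.IH[of "n - d" D'] d1 by auto
    have "J \<noteq> []" using J d1 by auto
    have "des_set (d # J) = insert d ((+) d ` D')" using \<open>J \<noteq> []\<close> J by (simp add: des_set_Cons)
    also have "\<dots> = D"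
    proof (intro Set.set_eqI iffI)
      fix x assume "x \<in> insert d ((+) d ` D')"
      then show "x \<in> D" unfolding D'_def using dD dmin by (auto simp: image_image)
    next
      fix x assume x: "x \<in> D"
      show "x \<in> insert d ((+) d ` D')"
      proof (cases "x = d")
        case False
        then have "x - d \<in> D'" using x unfolding D'_def by auto
        moreover have "x = d + (x - d)" using dmin[OF x] by simp
        ultimately show ?thesis by blast
      qed simp
    qed
    finally show ?thesis using J d1 by (intro exI[of _ "d # J"]) auto
  qed
qed

lemma comp_of_des: assumes "D \<subseteq> {1..<n}"
  shows "comp_of_des n D \<in> comps n" "des_set (comp_of_des n D) = D"
proof -
  obtain I where I: "is_comp I" "sum_list I = n" "des_set I = D" using des_set_surj[OF assms] by blast
  have "comp_of_des n D = I" unfolding comp_of_des_def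
  proof (rule the_equality)
    show "I \<in> comps n \<and> des_set I = D" using I by (simp add: comps_def)
    fix I' assume "I' \<in> comps n \<and> des_set I' = D"
    then show "I' = I" using des_set_inj[of I' I] I by (simp add: comps_def)
  qed
  then show "comp_of_des n D \<in> comps n" "des_set (comp_of_des n D) = D" using I by (auto simp: comps_def)
qed

lemma comp_of_des_des: "I \<in> comps n \<Longrightarrow> comp_of_des n (des_set I) = I"
proof -
  assume a: "I \<in> comps n"
  then have "des_set I \<subseteq> {1..<n}" using des_set_sub[of I] by (simp add: comps_def)
  from comp_of_des[OF this] show ?thesis using des_set_inj[of "comp_of_des n (des_set I)" I] a
    by (simp add: comps_def)
qed

lemma comps_eqI: "A \<in> comps n \<Longrightarrow> B \<in> comps n \<Longrightarrow> des_set A = des_set B \<Longrightarrow> A = B"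
  using des_set_inj[of A B] by (simp add: comps_def)

lemma conjc: assumes "I \<in> comps n"
  shows "conjc I \<in> comps n" "des_set (conjc I) = {1..<n} - des_set I" "conjc (conjc I) = I"
proof -
  have s: "sum_list I = n" using assms by (auto simp: comps_def)
  show 1: "conjc I \<in> comps n" "des_set (conjc I) = {1..<n} - des_set I"
    unfolding conjc_def s using comp_of_des[of "{1..<n} - des_set I" n] by auto
  have "sum_list (conjc I) = n" using 1 by (auto simp: comps_def)
  then have "conjc (conjc I) = comp_of_des n ({1..<n} - ({1..<n} - des_set I))"
    unfolding conjc_def[of "conjc I"] using 1 by simp
  also have "{1..<n} - ({1..<n} - des_set I) = des_set I" using des_set_sub[of I] assms s
    by (auto simp: comps_def)
  finally show "conjc (conjc I) = I" using comp_of_des_des[OF assms] by simp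
qed

lemma finite_comps: "finite (comps n)"
proof -
  have "comps n \<subseteq> {xs. set xs \<subseteq> {0..n} \<and> length xs \<le> n}"
  proof
    fix I assume "I \<in> comps n"
    then have "is_comp I" "sum_list I = n" by (auto simp: comps_def)
    moreover have "is_comp I \<Longrightarrow> length I \<le> sum_list I"
      by (induction I) auto
    moreover have "set I \<subseteq> {0..sum_list I}" using member_le_sum_list by fastforce
    ultimately show "I \<in> {xs. set xs \<subseteq> {0..n} \<and> length xs \<le> n}" by auto
  qed
  then show ?thesis using finite_lists_length_le[of "{0..n}" n] finite_subset by blast
qed

lemma des_set_append:
  assumes "A \<noteq> []" "B \<noteq> []"
  shows "des_set (A @ B) = des_set A \<union> insert (sum_list A) ((+) (sum_list A) ` des_set B)"
  using assms(1)
proof (induction A)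
  case Nil then show ?case by simp
next
  case (Cons a A)
  show ?case
  proof (cases "A = []")
    case True then show ?thesis using assms(2) by (simp add: des_set_Cons)
  next
    case False
    have "des_set ((a # A) @ B) = insert a ((+) a ` des_set (A @ B))"
      using assms(2) by (simp add: des_set_Cons)
    also have "\<dots> = insert a ((+) a ` (des_set A \<union> insert (sum_list A) ((+) (sum_list A) ` des_set B)))"
      using Cons.IH False by simp
    also have "\<dots> = des_set (a # A) \<union> insert (sum_list (a # A)) ((+) (sum_list (a # A)) ` des_set B)"
      using False by (simp add: des_set_Cons image_Un image_image add.assoc insert_commute)
    finally show ?thesis .
  qed
qed

lemma des_set_snoc: "A \<noteq> [] \<Longrightarrow> des_set (A @ [b]) = insert (sum_list A) (des_set A)"
  using des_set_append[of A "[b]"] by auto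

lemma des_set_replicate1: "des_set (replicate k (Suc 0)) = {1..<k}"
proof (induction k)
  case 0 then show ?case by simp
next
  case (Suc k)
  show ?case
  proof (cases k)
    case 0 then show ?thesis by simp
  next
    case (Suc j)
    then have "des_set (replicate (Suc k) (Suc 0)) = insert 1 (Suc ` {1..<k})"
      using Suc.IH by (simp add: des_set_Cons plus_1_eq_Suc)
    also have "\<dots> = {1..<Suc k}" using Suc by (auto simp: image_Suc_atLeastLessThan)
    finally show ?thesis .
  qed
qed



function blocks :: "nat list \<Rightarrow> nat list list" where
  "blocks [] = []"
| "blocks (x # xs) = (x # takeWhile (\<lambda>y. y < x) xs) # blocks (dropWhile (\<lambda>y. y < x) xs)"
  by pat_completeness auto
termination by (relation "measure length") (auto simp: le_imp_less_Suc length_dropWhile_le)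

lemma blocks_Nil_iff: "blocks s = [] \<longleftrightarrow> s = []"
  by (cases s) auto

lemma concat_blocks: "concat (blocks s) = s"
  by (induction s rule: blocks.induct) auto

lemma blocks_nonempty: "u \<in> set (blocks s) \<Longrightarrow> u \<noteq> []"
  by (induction s rule: blocks.induct) auto

lemma blocks_hd_ge: "u \<in> set (blocks s) \<Longrightarrow> s \<noteq> [] \<and> hd s \<le> hd u"
proof (induction s rule: blocks.induct)
  case 1 then show ?case by simp
next
  case (2 x xs)
  show ?case
  proof (cases "u = x # takeWhile (\<lambda>y. y < x) xs")
    case True then show ?thesis by simp
  next
    case False
    then have u: "u \<in> set (blocks (dropWhile (\<lambda>y. y < x) xs))" using "2.prems" by simp
    with "2.IH" have "dropWhile (\<lambda>y. y < x) xs \<noteq> []" "hd (dropWhile (\<lambda>y. y < x) xs) \<le> hd u" by auto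
    moreover have "\<not> hd (dropWhile (\<lambda>y. y < x) xs) < x"
      using hd_dropWhile[OF calculation(1)] .
    ultimately show ?thesis by simp
  qed
qed

lemma blocks_init_dom: "u \<in> set (blocks s) \<Longrightarrow> init_dom u"
proof (induction s rule: blocks.induct)
  case 1 then show ?case by simp
next
  case (2 x xs)
  show ?case
  proof (cases "u = x # takeWhile (\<lambda>y. y < x) xs")
    case True
    have "\<And>j. 0 < j \<Longrightarrow> j < length u \<Longrightarrow> u ! j < u ! 0"
    proof -
      fix j assume j: "0 < j" "j < length u"
      then obtain i where i: "j = Suc i" by (cases j) auto
      have "i < length (takeWhile (\<lambda>y. y < x) xs)" using j i True by simp
      then have "takeWhile (\<lambda>y. y < x) xs ! i \<in> set (takeWhile (\<lambda>y. y < x) xs)" by simp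
      then have "takeWhile (\<lambda>y. y < x) xs ! i < x" by (blast dest: set_takeWhileD)
      then show "u ! j < u ! 0" using True i by simp
    qed
    then show ?thesis using True by (simp add: init_dom_def)
  next
    case False
    then show ?thesis using "2" by simp
  qed
qed

lemma blocks_sorted: "distinct s \<Longrightarrow> sorted_wrt (\<lambda>u v. hd u < hd v) (blocks s)"
proof (induction s rule: blocks.induct)
  case 1 then show ?case by simp
next
  case (2 x xs)
  let ?b = "dropWhile (\<lambda>y. y < x) xs"
  have db: "distinct ?b" using "2.prems"
    by (metis distinct_append distinct.simps(2) takeWhile_dropWhile_id)
  have "\<forall>v\<in>set (blocks ?b). x < hd v"
  proof
    fix v assume v: "v \<in> set (blocks ?b)"
    have h: "?b \<noteq> [] \<and> hd ?b \<le> hd v" using blocks_hd_ge[OF v] .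
    then have "?b \<noteq> []" "hd ?b \<le> hd v" by blast+
    moreover have "\<not> hd ?b < x" using hd_dropWhile[OF calculation(1)] .
    moreover have "hd ?b \<noteq> x" using "2.prems" calculation(1)
      by (metis distinct.simps(2) hd_in_set set_dropWhileD)
    ultimately show "x < hd v" by simp
  qed
  then show ?case using "2.IH" db by simp
qed

lemma blocks_unique:
  "concat us = s \<Longrightarrow> (\<forall>u\<in>set us. init_dom u) \<Longrightarrow> sorted_wrt (\<lambda>u v. hd u < hd v) us \<Longrightarrow> us = blocks s"
proof (induction us arbitrary: s)
  case Nil then show ?case by simp
next
  case (Cons u us)
  have "init_dom u" using Cons.prems by simp
  then obtain x a where u: "u = x # a" unfolding init_dom_def by (cases u) auto
  have alt: "\<forall>y\<in>set a. y < x"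
  proof
    fix y assume "y \<in> set a"
    then obtain j where "j < length a" "a ! j = y" by (auto simp: in_set_conv_nth)
    then show "y < x" using \<open>init_dom u\<close> u unfolding init_dom_def
      by (metis Suc_less_eq length_Cons nth_Cons_0 nth_Cons_Suc zero_less_Suc)
  qed
  have nx: "concat us = [] \<or> \<not> hd (concat us) < x"
  proof (cases us)
    case Nil then show ?thesis by simp
  next
    case (Cons v vs)
    have "init_dom v" using Cons.prems \<open>us = v # vs\<close> by simp
    then have "v \<noteq> []" by (simp add: init_dom_def)
    then have "hd (concat us) = hd v" using \<open>us = v # vs\<close> by simp
    moreover have "x < hd v" using Cons.prems \<open>us = v # vs\<close> u by simp
    ultimately show ?thesis by simp
  qed
  have tw: "takeWhile (\<lambda>y. y < x) (a @ concat us) = a"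
   and dw: "dropWhile (\<lambda>y. y < x) (a @ concat us) = concat us"
  proof -
    have t1: "takeWhile (\<lambda>y. y < x) (a @ concat us) = a @ takeWhile (\<lambda>y. y < x) (concat us)"
      using alt by (intro takeWhile_append2) auto
    have d1: "dropWhile (\<lambda>y. y < x) (a @ concat us) = dropWhile (\<lambda>y. y < x) (concat us)"
      using alt by (intro dropWhile_append2) auto
    have "takeWhile (\<lambda>y. y < x) (concat us) = [] \<and> dropWhile (\<lambda>y. y < x) (concat us) = concat us"
    proof (cases "concat us")
      case Nil then show ?thesis unfolding Nil by simp
    next
      case (Cons h t) then show ?thesis using nx by simp
    qed
    then show "takeWhile (\<lambda>y. y < x) (a @ concat us) = a"
      "dropWhile (\<lambda>y. y < x) (a @ concat us) = concat us" using t1 d1 by simp_all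
  qed
  have ub: "us = blocks (concat us)" using Cons.IH Cons.prems by simp
  have "s = x # (a @ concat us)" using Cons.prems u by simp
  then have "blocks s = (x # a) # blocks (concat us)" using tw dw by simp
  then show ?case using ub u by simp
qed

lemma SC_blocks: "distinct s \<Longrightarrow> SC s = map length (blocks s)"
proof -
  assume d: "distinct s"
  have "(THE us. concat us = s \<and> (\<forall>u\<in>set us. init_dom u) \<and> sorted_wrt (\<lambda>u v. hd u < hd v) us) = blocks s"
    by (rule the_equality) (use concat_blocks blocks_init_dom blocks_sorted[OF d] blocks_unique in auto)
  then show ?thesis by (simp add: SC_def)
qed

definition LRM :: "nat list \<Rightarrow> nat set" where
  "LRM s = {p. 0 < p \<and> p < length s \<and> (\<forall>j<p. s ! j < s ! p)}"

lemma sum_length_blocks: "sum_list (map length (blocks s)) = length s"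
proof -
  have "length (concat (blocks s)) = length s" by (simp add: concat_blocks)
  then show ?thesis by (simp add: length_concat)
qed

lemma SC_comp: "distinct s \<Longrightarrow> SC s \<in> comps (length s)"
  using blocks_nonempty sum_length_blocks
  by (auto simp: SC_blocks comps_def is_comp_def)

lemma LRM_Cons_split:
  assumes d: "distinct (x # xs)"
  defines "a \<equiv> takeWhile (\<lambda>y. y < x) xs" and "b \<equiv> dropWhile (\<lambda>y. y < x) xs"
  shows "LRM (x # xs) = (if b = [] then {} else insert (Suc (length a)) ((+) (Suc (length a)) ` LRM b))"
proof -
  have xs: "xs = a @ b" unfolding a_def b_def by simp
  have alt: "\<forall>y\<in>set a. y < x" unfolding a_def by (blast dest: set_takeWhileD)
  let ?s = "x # a @ b"
  have small: "\<And>p. 0 < p \<Longrightarrow> p \<le> length a \<Longrightarrow> p \<notin> LRM ?s"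
  proof -
    fix p assume p: "0 < p" "p \<le> length a"
    then have "?s ! p = a ! (p - 1)" by (cases p) (auto simp: nth_append)
    moreover have "a ! (p - 1) < x" using alt p by auto
    ultimately show "p \<notin> LRM ?s" using p unfolding LRM_def by force
  qed
  have s0: "?s ! 0 = x" by simp
  have sb: "\<And>q. ?s ! (Suc (length a) + q) = b ! q" by (simp add: nth_append)
  have lex: "\<And>j. j \<le> length a \<Longrightarrow> ?s ! j \<le> x"
  proof -
    fix j assume j: "j \<le> length a"
    show "?s ! j \<le> x"
    proof (cases j)
      case 0 then show ?thesis by simp
    next
      case (Suc i)
      then have "?s ! j = a ! i" "i < length a" using j by (auto simp: nth_append)
      then show ?thesis using alt by (metis nth_mem less_imp_le)
    qed
  qed
  show ?thesis
  proof (cases "b = []")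
    case True
    have "LRM ?s = {}"
    proof -
      have "\<And>p. p \<in> LRM ?s \<Longrightarrow> False"
      proof -
        fix p assume p: "p \<in> LRM ?s"
        then have "0 < p" "p \<le> length a" using True unfolding LRM_def by auto
        then show False using small p by blast
      qed
      then show ?thesis by blast
    qed
    then show ?thesis using True xs by simp
  next
    case False
    have hb: "\<not> hd b < x" using hd_dropWhile[of "\<lambda>y. y < x" xs] False unfolding b_def by blast
    have hbx: "hd b \<noteq> x" using d False xs by (metis distinct.simps(2) hd_in_set Un_iff set_append)
    have hgt: "x < b ! 0" using hb hbx False by (simp add: hd_conv_nth)
    have "LRM ?s = insert (Suc (length a)) ((+) (Suc (length a)) ` LRM b)"
    proof (intro Set.set_eqI iffI)
      fix p assume p: "p \<in> LRM ?s"
      then have p0: "0 < p" "p < length ?s" "\<forall>j<p. ?s ! j < ?s ! p" unfolding LRM_def by auto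
      have "\<not> p \<le> length a" using small p p0 by blast
      then obtain q where q: "p = Suc (length a) + q" by (metis add_Suc less_imp_Suc_add not_le_imp_less plus_nat.simps(2))
      show "p \<in> insert (Suc (length a)) ((+) (Suc (length a)) ` LRM b)"
      proof (cases "q = 0")
        case True then show ?thesis using q by simp
      next
        case False
        have "q \<in> LRM b" unfolding LRM_def
        proof (intro CollectI conjI allI impI)
          show "0 < q" using False by simp
          show "q < length b" using p0 q by simp
          fix j assume "j < q"
          then have "Suc (length a) + j < p" using q by simp
          then have "?s ! (Suc (length a) + j) < ?s ! p" using p0(3) by blast
          moreover have "?s ! p = b ! q" using sb[of q] q by simp
          ultimately show "b ! j < b ! q" using sb[of j] by simp
        qed
        then show ?thesis using q by blast
      qed
    next
      fix p assume p: "p \<in> insert (Suc (length a)) ((+) (Suc (length a)) ` LRM b)"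
      then obtain q where q: "p = Suc (length a) + q" "q = 0 \<or> q \<in> LRM b" by auto
      have qb: "q < length b" using q False unfolding LRM_def by auto
      have bq: "b ! 0 \<le> b ! q" using q unfolding LRM_def by (cases "q = 0") auto
      show "p \<in> LRM ?s" unfolding LRM_def
      proof (intro CollectI conjI allI impI)
        show "0 < p" "p < length ?s" using q qb by auto
        fix j assume j: "j < p"
        show "?s ! j < ?s ! p"
        proof (cases "j \<le> length a")
          case True
          then have "?s ! j \<le> x" by (rule lex)
          then show ?thesis using hgt bq sb q by (metis le_less_trans order_less_le_trans)
        next
          case False
          then obtain i where i: "j = Suc (length a) + i" by (metis add_Suc less_imp_Suc_add not_le_imp_less plus_nat.simps(2))
          then have "i < q" using j q by simp
          then have "b ! i < b ! q" using q unfolding LRM_def by auto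
          then show ?thesis using i q sb by simp
        qed
      qed
    qed
    then show ?thesis using False xs by simp
  qed
qed

lemma des_SC: "distinct s \<Longrightarrow> des_set (SC s) = LRM s"
proof -
  assume d: "distinct s"
  have "des_set (map length (blocks s)) = LRM s" using d
  proof (induction s rule: blocks.induct)
    case 1 then show ?case by (simp add: LRM_def)
  next
    case (2 x xs)
    let ?a = "takeWhile (\<lambda>y. y < x) xs" and ?b = "dropWhile (\<lambda>y. y < x) xs"
    have db: "distinct ?b" using "2.prems"
      by (metis distinct_append distinct.simps(2) takeWhile_dropWhile_id)
    have IH: "des_set (map length (blocks ?b)) = LRM ?b" using "2.IH" db by simp
    have e: "blocks ?b = [] \<longleftrightarrow> ?b = []" by (rule blocks_Nil_iff)
    show ?case using LRM_Cons_split[OF "2.prems"] IH e by (simp add: des_set_Cons)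
  qed
  then show ?thesis using SC_blocks[OF d] by simp
qed



lemma blocks_append:
  "(\<forall>a\<in>set al. a < y) \<Longrightarrow> blocks (al @ y # ys) = blocks al @ blocks (y # ys)"
proof (induction al rule: blocks.induct)
  case 1 then show ?case by simp
next
  case (2 z zs)
  have zy: "\<not> y < z" using "2.prems" by auto
  have t: "takeWhile (\<lambda>w. w < z) (zs @ y # ys) = takeWhile (\<lambda>w. w < z) zs"
    using zy by (rule takeWhile_tail)
  have d: "dropWhile (\<lambda>w. w < z) (zs @ y # ys) = dropWhile (\<lambda>w. w < z) zs @ y # ys"
    using zy by (rule dropWhile_append3)
  have "\<forall>a\<in>set (dropWhile (\<lambda>w. w < z) zs). a < y" using "2.prems"
    by (auto dest: set_dropWhileD)
  then have "blocks (dropWhile (\<lambda>w. w < z) zs @ y # ys) = blocks (dropWhile (\<lambda>w. w < z) zs) @ blocks (y # ys)"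
    using "2.IH" by simp
  then show ?case using t d by simp
qed

lemma blocks_max: "(\<forall>c\<in>set ys. c < y) \<Longrightarrow> blocks (y # ys) = [y # ys]"
proof -
  assume a: "\<forall>c\<in>set ys. c < y"
  then have "takeWhile (\<lambda>w. w < y) ys = ys" by (simp add: takeWhile_eq_all_conv)
  moreover have "dropWhile (\<lambda>w. w < y) ys = []" using a by (simp add: dropWhile_eq_Nil_conv)
  moreover have "blocks (y # ys) = (y # takeWhile (\<lambda>w. w < y) ys) # blocks (dropWhile (\<lambda>w. w < y) ys)"
    by simp
  ultimately show ?thesis by (simp only: blocks.simps(1))
qed

lemma SC_append_max:
  assumes "distinct (al @ y # ys)" "\<forall>a\<in>set al. a < y" "\<forall>c\<in>set ys. c < y"
  shows "SC (al @ y # ys) = SC al @ [Suc (length ys)]"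
proof -
  have "distinct al" using assms(1) by simp
  have "SC (al @ y # ys) = map length (blocks (al @ y # ys))" using assms(1) by (rule SC_blocks)
  also have "blocks (al @ y # ys) = blocks al @ blocks (y # ys)" using assms(2) by (rule blocks_append)
  also have "blocks (y # ys) = [y # ys]" using assms(3) by (rule blocks_max)
  finally show ?thesis using SC_blocks[OF \<open>distinct al\<close>] by simp
qed

lemma LRM_take: "LRM (take q s) = LRM s \<inter> {..<q}"
  unfolding LRM_def by auto

lemma SC_take:
  assumes "distinct s" "q \<le> length s"
  shows "des_set (SC (take q s)) = des_set (SC s) \<inter> {..<q}"
  using assms des_SC LRM_take by simp

lemma ribbon_prefix_props:
  "is_comp I \<Longrightarrow> M \<le> sum_list I \<Longrightarrow>
    ribbon_prefix M I \<in> comps M \<and> des_set (ribbon_prefix M I) = des_set I \<inter> {1..<M}"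
proof (induction M I rule: ribbon_prefix.induct)
  case (1 I) then show ?case by (simp add: comps_def)
next
  case (2 m) then show ?case by simp
next
  case (3 m i I)
  show ?case
  proof (cases "Suc m \<le> i")
    case True
    have "des_set (i # I) \<inter> {1..<Suc m} = {}"
    proof -
      have "des_set (i # I) \<subseteq> {i..}" by (auto simp: des_set_Cons)
      then show ?thesis using True by auto
    qed
    then show ?thesis using True by (simp add: comps_def)
  next
    case False
    have ci: "0 < i" "is_comp I" using "3.prems" by auto
    have le: "Suc m - i \<le> sum_list I" using "3.prems" by simp
    have pos: "0 < Suc m - i" using False by simp
    have IH: "ribbon_prefix (Suc m - i) I \<in> comps (Suc m - i) \<and>
        des_set (ribbon_prefix (Suc m - i) I) = des_set I \<inter> {1..<Suc m - i}"
      using "3.IH" False ci le by simp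
    let ?R = "ribbon_prefix (Suc m - i) I"
    have Rne: "?R \<noteq> []" using IH pos by (auto simp: comps_def)
    have Ine: "I \<noteq> []" using le pos by auto
    have eq: "ribbon_prefix (Suc m) (i # I) = i # ?R" using False by simp
    have "des_set (i # ?R) = insert i ((+) i ` (des_set I \<inter> {1..<Suc m - i}))"
      using Rne IH by (simp add: des_set_Cons)
    also have "\<dots> = des_set (i # I) \<inter> {1..<Suc m}"
    proof -
      have dI: "des_set I \<subseteq> {1..<sum_list I}" using des_set_sub ci by simp
      show ?thesis using Ine False ci(1) dI by (auto simp: des_set_Cons)
    qed
    finally show ?thesis using eq IH False ci by (simp add: comps_def)
  qed
qed

lemma left_of_decomp: "left_of x y s \<longleftrightarrow> (\<exists>a b c. s = a @ x # b @ y # c)"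
proof
  assume "left_of x y s"
  then obtain p q where pq: "p < q" "q < length s" "s ! p = x" "s ! q = y" unfolding left_of_def by auto
  define a where "a = take p s"
  define b where "b = take (q - Suc p) (drop (Suc p) s)"
  define c where "c = drop (Suc q) s"
  have "s = take p s @ s ! p # drop (Suc p) s" by (rule id_take_nth_drop) (use pq in simp)
  moreover have "drop (Suc p) s = take (q - Suc p) (drop (Suc p) s) @ s ! q # drop (Suc q) s"
  proof -
    have "q - Suc p < length (drop (Suc p) s)" using pq by simp
    then have "drop (Suc p) s = take (q - Suc p) (drop (Suc p) s) @ (drop (Suc p) s) ! (q - Suc p) # drop (Suc (q - Suc p)) (drop (Suc p) s)"
      by (rule id_take_nth_drop)
    moreover have "(drop (Suc p) s) ! (q - Suc p) = s ! q" using pq by simp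
    moreover have "drop (Suc (q - Suc p)) (drop (Suc p) s) = drop (Suc q) s" using pq by simp
    ultimately show ?thesis by simp
  qed
  ultimately have "s = a @ x # b @ y # c" using pq unfolding a_def b_def c_def by simp
  then show "\<exists>a b c. s = a @ x # b @ y # c" by blast
next
  assume "\<exists>a b c. s = a @ x # b @ y # c"
  then obtain a b c where s: "s = a @ x # b @ y # c" by blast
  show "left_of x y s" unfolding left_of_def
    by (rule exI[of _ "length a"], rule exI[of _ "Suc (length a + length b)"]) (simp add: s nth_append)
qed

lemma left_of_set: "left_of x y s \<Longrightarrow> x \<in> set s \<and> y \<in> set s"
  unfolding left_of_def by auto

lemma left_of_filter: "left_of x y s \<Longrightarrow> P x \<Longrightarrow> P y \<Longrightarrow> left_of x y (filter P s)"
proof -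
  assume "left_of x y s" "P x" "P y"
  then obtain a b c where "s = a @ x # b @ y # c" unfolding left_of_decomp by blast
  then have "filter P s = filter P a @ x # filter P b @ y # filter P c" using \<open>P x\<close> \<open>P y\<close> by simp
  then show ?thesis unfolding left_of_decomp by blast
qed

lemma left_of_total: "x \<in> set s \<Longrightarrow> y \<in> set s \<Longrightarrow> x \<noteq> y \<Longrightarrow> left_of x y s \<or> left_of y x s"
proof -
  assume a: "x \<in> set s" "y \<in> set s" "x \<noteq> y"
  then obtain p q where "p < length s" "q < length s" "s ! p = x" "s ! q = y" by (auto simp: in_set_conv_nth)
  moreover have "p \<noteq> q" using calculation a by auto
  ultimately show ?thesis unfolding left_of_def by (metis nat_neq_iff)
qed

lemma left_of_asym: "distinct s \<Longrightarrow> left_of x y s \<Longrightarrow> \<not> left_of y x s"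
  unfolding left_of_def by (metis nth_eq_iff_index_eq order.strict_trans order_less_irrefl)

lemma left_of_irrefl: "distinct s \<Longrightarrow> \<not> left_of x x s"
  unfolding left_of_def by (metis nth_eq_iff_index_eq order_less_irrefl order.strict_trans)

lemma left_of_trans: "distinct s \<Longrightarrow> left_of x y s \<Longrightarrow> left_of y z s \<Longrightarrow> left_of x z s"
  unfolding left_of_def by (metis nth_eq_iff_index_eq order.strict_trans)

lemma left_of_filter_iff:
  assumes "distinct s" "P x" "P y" "x \<in> set s" "y \<in> set s"
  shows "left_of x y (filter P s) \<longleftrightarrow> left_of x y s"
proof
  assume h: "left_of x y (filter P s)"
  have df: "distinct (filter P s)" using assms by simp
  show "left_of x y s"
  proof (rule ccontr)
    assume n: "\<not> left_of x y s"
    have "x \<noteq> y" using h left_of_irrefl[OF df] by blast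
    then have "left_of y x s" using n left_of_total assms by blast
    then have "left_of y x (filter P s)" using assms by (simp add: left_of_filter)
    then show False using h left_of_asym[OF df] by blast
  qed
qed (use assms left_of_filter in auto)

lemma perms_length: "s \<in> perms n \<Longrightarrow> length s = n"
  unfolding perms_def using distinct_card by fastforce

lemma finite_perms: "finite (perms n)"
proof -
  have "perms n \<subseteq> {xs. set xs \<subseteq> {1..n} \<and> length xs = n}" using perms_length by (auto simp: perms_def)
  then show ?thesis using finite_lists_length_eq[of "{1..n}" n] finite_subset by blast
qed

definition RCD :: "nat list \<Rightarrow> nat set" where
  "RCD s = {i. 1 \<le> i \<and> i < length s \<and> left_of (i + 1) i s}"

lemma RC_props: "s \<in> perms n \<Longrightarrow> RC s \<in> comps n \<and> des_set (RC s) = RCD s"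
proof -
  assume s: "s \<in> perms n"
  have "RCD s \<subseteq> {1..<n}" using perms_length[OF s] by (auto simp: RCD_def)
  then show ?thesis using comp_of_des[of "RCD s" n] perms_length[OF s] by (simp add: RC_def RCD_def)
qed

lemma filter_perms: "s \<in> perms n \<Longrightarrow> N \<le> n \<Longrightarrow> filter (\<lambda>x. x \<le> N) s \<in> perms N"
  unfolding perms_def by auto

lemma RCD_filter:
  assumes "s \<in> perms n" "N \<le> n"
  shows "RCD (filter (\<lambda>x. x \<le> N) s) = RCD s \<inter> {1..<N}"
proof -
  have lf: "length (filter (\<lambda>x. x \<le> N) s) = N" using filter_perms[OF assms] perms_length by blast
  have ls: "length s = n" using perms_length assms by blast
  have d: "distinct s" "set s = {1..n}" using assms by (auto simp: perms_def)
  show ?thesis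
  proof (intro Set.set_eqI iffI)
    fix i assume "i \<in> RCD (filter (\<lambda>x. x \<le> N) s)"
    then have i: "1 \<le> i" "i < N" "left_of (i + 1) i (filter (\<lambda>x. x \<le> N) s)" using lf by (auto simp: RCD_def)
    then have "left_of (i + 1) i s" using left_of_filter_iff[of s "\<lambda>x. x \<le> N" "i+1" i] d assms by auto
    then show "i \<in> RCD s \<inter> {1..<N}" using i ls assms by (auto simp: RCD_def)
  next
    fix i assume "i \<in> RCD s \<inter> {1..<N}"
    then have i: "1 \<le> i" "i < N" "left_of (i + 1) i s" by (auto simp: RCD_def)
    then have "left_of (i + 1) i (filter (\<lambda>x. x \<le> N) s)" using left_of_filter_iff[of s "\<lambda>x. x \<le> N" "i+1" i] d assms by auto
    then show "i \<in> RCD (filter (\<lambda>x. x \<le> N) s)" using i lf by (auto simp: RCD_def)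
  qed
qed



lemma card_shuffles:
  "distinct xs \<Longrightarrow> distinct ys \<Longrightarrow> set xs \<inter> set ys = {} \<Longrightarrow>
    card (shuffles xs ys) = (length xs + length ys) choose length xs"
proof (induction xs ys rule: shuffles.induct)
  case (1 ys) then show ?case by simp
next
  case (2 xs) then show ?case by simp
next
  case (3 x xs y ys)
  have xy: "x \<noteq> y" using "3.prems" by auto
  have A: "card (shuffles xs (y # ys)) = (length xs + Suc (length ys)) choose length xs"
    using "3.IH"(1) "3.prems" by simp
  have B: "card (shuffles (x # xs) ys) = (Suc (length xs) + length ys) choose Suc (length xs)"
    using "3.IH"(2) "3.prems" by simp
  have "card ((#) x ` shuffles xs (y # ys) \<union> (#) y ` shuffles (x # xs) ys)
      = card ((#) x ` shuffles xs (y # ys)) + card ((#) y ` shuffles (x # xs) ys)"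
    by (rule card_Un_disjoint) (use xy in auto)
  also have "\<dots> = card (shuffles xs (y # ys)) + card (shuffles (x # xs) ys)"
    by (simp add: card_image)
  also have "\<dots> = (Suc (length xs + length ys) choose length xs) + (Suc (length xs + length ys) choose Suc (length xs))"
    using A[unfolded add_Suc_right] B[unfolded add_Suc] by (simp only:)
  also have "\<dots> = Suc (Suc (length xs + length ys)) choose Suc (length xs)"
    by (rule binomial_Suc_Suc[symmetric])
  finally have "card (shuffles (x # xs) (y # ys)) = Suc (Suc (length xs + length ys)) choose Suc (length xs)"
    by (simp only: shuffles.simps)
  moreover have "length (x # xs) + length (y # ys) = Suc (Suc (length xs + length ys))" by simp
  ultimately show ?case by (simp only: length_Cons)
qed

lemma rev_upt_split:
  assumes "a \<le> i" "Suc i < b"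
  shows "rev [a..<b] = rev [Suc (Suc i)..<b] @ Suc i # i # rev [a..<i]"
proof -
  have "[a..<b] = [a..<i] @ [i..<b]" using upt_add_eq_append[of a i "b - i"] assms by simp
  also have "[i..<b] = i # Suc i # [Suc (Suc i)..<b]" using assms by (simp add: upt_conv_Cons)
  finally show ?thesis by simp
qed

lemma top_iff:
  assumes s: "s \<in> perms n" and k: "1 \<le> k" "k \<le> n" and N: "N = n - k"
  shows "{N+1..<n} \<subseteq> RCD s \<longleftrightarrow> filter (\<lambda>x. N < x) s = rev [N+1..<n+1]"
proof -
  let ?L = "filter (\<lambda>x. N < x) s"
  have d: "distinct s" "set s = {1..n}" using s by (auto simp: perms_def)
  have ls: "length s = n" using perms_length[OF s] .
  have dL: "distinct ?L" using d by simp
  have sL: "set ?L = {N+1..n}" using d N k by auto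
  have iff: "\<And>i. N+1 \<le> i \<Longrightarrow> i < n \<Longrightarrow> left_of (i+1) i ?L \<longleftrightarrow> left_of (i+1) i s"
    using d N by (intro left_of_filter_iff) auto
  show ?thesis
  proof
    assume h: "{N+1..<n} \<subseteq> RCD s"
    then have h1: "\<And>i. N+1 \<le> i \<Longrightarrow> i < n \<Longrightarrow> left_of (i+1) i ?L" using iff by (auto simp: RCD_def)
    have h2: "\<And>d x. x - d \<in> set ?L \<Longrightarrow> x \<in> set ?L \<Longrightarrow> 0 < d \<Longrightarrow> d \<le> x \<Longrightarrow> left_of x (x - d) ?L"
    proof -
      fix d x
      show "x - d \<in> set ?L \<Longrightarrow> x \<in> set ?L \<Longrightarrow> 0 < d \<Longrightarrow> d \<le> x \<Longrightarrow> left_of x (x - d) ?L"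
      proof (induction d)
        case 0 then show ?case by simp
      next
        case (Suc d)
        have a: "left_of (x - d) (x - Suc d) ?L"
        proof -
          have xL: "x \<in> {N+1..n}" using Suc.prems(2) unfolding sL .
          have yL: "x - Suc d \<in> {N+1..n}" using Suc.prems(1) unfolding sL .
          have "N+1 \<le> x - Suc d" "x - Suc d < n" using xL yL Suc.prems(4) by auto
          then have "left_of (x - Suc d + 1) (x - Suc d) ?L" by (rule h1)
          moreover have "x - Suc d + 1 = x - d" using Suc.prems by simp
          ultimately show ?thesis by simp
        qed
        show ?case
        proof (cases "d = 0")
          case True then show ?thesis using a by simp
        next
          case False
          have xL: "x \<in> {N+1..n}" using Suc.prems(2) unfolding sL .
          have yL: "x - Suc d \<in> {N+1..n}" using Suc.prems(1) unfolding sL .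
          have "x - d \<in> set ?L" unfolding sL using xL yL by auto
          then have "left_of x (x - d) ?L" using Suc.IH Suc.prems(2,4) False by simp
          then show ?thesis using a left_of_trans[OF dL] by blast
        qed
      qed
    qed
    have lt: "\<And>x y. x \<in> set ?L \<Longrightarrow> y \<in> set ?L \<Longrightarrow> y < x \<Longrightarrow> left_of x y ?L"
    proof -
      fix x y assume xy: "x \<in> set ?L" "y \<in> set ?L" "y < x"
      have e: "x - (x - y) = y" using xy by simp
      have "left_of x (x - (x - y)) ?L" by (rule h2) (use xy e in auto)
      then show "left_of x y ?L" using e by simp
    qed
    have "sorted_wrt (>) ?L"
    proof (subst sorted_wrt_iff_nth_less, intro allI impI)
      fix i j assume ij: "i < j" "j < length ?L"
      show "?L ! i > ?L ! j"
      proof (rule ccontr)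
        assume "\<not> ?L ! i > ?L ! j"
        moreover have "?L ! i \<noteq> ?L ! j" using ij dL nth_eq_iff_index_eq by fastforce
        ultimately have "?L ! i < ?L ! j" by simp
        moreover have m1: "?L ! j \<in> set ?L" using ij by (intro nth_mem) simp
        moreover have m2: "?L ! i \<in> set ?L" using ij by (intro nth_mem) simp
        ultimately have "left_of (?L ! j) (?L ! i) ?L" using lt by blast
        then obtain p r where "p < r" "r < length ?L" "?L ! p = ?L ! j" "?L ! r = ?L ! i"
          unfolding left_of_def by blast
        then have "p = j" "r = i" using dL ij nth_eq_iff_index_eq by (metis order.strict_trans)+
        then show False using \<open>p < r\<close> ij by simp
      qed
    qed
    then have "sorted_wrt (<) (rev ?L)" by (simp add: sorted_wrt_rev)
    then have "sorted (rev ?L)" "distinct (rev ?L)" using strict_sorted_iff[of "rev ?L"] by blast+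
    moreover have "set (rev ?L) = set [N+1..<n+1]" unfolding set_rev sL by auto
    moreover have "sorted [N+1..<n+1]" "distinct [N+1..<n+1]" by (rule sorted_upt, rule distinct_upt)
    ultimately have "rev ?L = [N+1..<n+1]" using sorted_distinct_set_unique[of "rev ?L" "[N+1..<n+1]"] by blast
    then show "?L = rev [N+1..<n+1]" by (metis rev_rev_ident)
  next
    assume h: "?L = rev [N+1..<n+1]"
    show "{N+1..<n} \<subseteq> RCD s"
    proof
      fix i assume i: "i \<in> {N+1..<n}"
      have "rev [N+1..<n+1] = rev [Suc (Suc i)..<n+1] @ Suc i # i # rev [N+1..<i]"
        using i by (intro rev_upt_split) auto
      then have "left_of (i+1) i ?L" unfolding h left_of_decomp
        by (intro exI[of _ "rev [Suc (Suc i)..<n+1]"] exI[of _ "[]"] exI[of _ "rev [N+1..<i]"]) simp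
      moreover have "N+1 \<le> i" "i < n" using i by auto
      ultimately have "left_of (i+1) i s" using iff by blast
      then show "i \<in> RCD s" using i ls k N by (auto simp: RCD_def)
    qed
  qed
qed

lemma pos_max:
  assumes s: "s \<in> perms n" and C': "C' \<in> comps (n - m)" and m: "1 \<le> m" "m \<le> n"
    and sc: "SC s = C' @ [m]"
  shows "s ! (n - m) = n"
proof -
  let ?q = "n - m"
  have d: "distinct s" "set s = {1..n}" using s by (auto simp: perms_def)
  have ls: "length s = n" using perms_length[OF s] .
  have LR: "LRM s = des_set (C' @ [m])" using des_SC[OF d(1)] sc by simp
  have sC: "sum_list C' = ?q" "is_comp C'" using C' by (auto simp: comps_def)
  have dC: "des_set C' \<subseteq> {1..<?q}" using des_set_sub[OF sC(2)] sC by simp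
  have LR2: "LRM s \<subseteq> {..?q}" "0 < ?q \<Longrightarrow> ?q \<in> LRM s"
  proof -
    show "LRM s \<subseteq> {..?q}"
    proof (cases "C' = []")
      case True then show ?thesis using LR by simp
    next
      case False then show ?thesis using LR des_set_snoc[OF False] sC dC by auto
    qed
    show "0 < ?q \<Longrightarrow> ?q \<in> LRM s"
    proof -
      assume "0 < ?q"
      then have "C' \<noteq> []" using sC by auto
      then show ?thesis using LR des_set_snoc sC by auto
    qed
  qed
  have "n \<in> set s" using d m by auto
  then obtain p where p: "p < n" "s ! p = n" using ls by (auto simp: in_set_conv_nth)
  have "p \<le> ?q"
  proof (cases "p = 0")
    case False
    have "\<forall>j<p. s ! j < s ! p"
    proof (intro allI impI)
      fix j assume "j < p"
      then have jn: "j < length s" "j \<noteq> p" using p ls by auto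
      then have "s ! j \<in> set s" by simp
      moreover have "p < length s" using p ls by simp
      moreover have "s ! j \<noteq> s ! p" using nth_eq_iff_index_eq[OF d(1) jn(1) calculation(2)] jn by simp
      ultimately have "s ! j \<in> set s" "s ! j \<noteq> n" using p by simp_all
      then show "s ! j < s ! p" using p d by auto
    qed
    then have "p \<in> LRM s" using False p ls by (simp add: LRM_def)
    then show ?thesis using LR2 by auto
  qed simp
  moreover have "?q \<le> p"
  proof (rule ccontr)
    assume "\<not> ?q \<le> p"
    then have "p < ?q" "0 < ?q" by auto
    then have "s ! p < s ! ?q" using LR2(2) by (auto simp: LRM_def)
    moreover have "s ! ?q \<in> set s" using ls m by simp
    ultimately show False using p d by auto
  qed
  ultimately show ?thesis using p by simp
qed



lemma rev_upt_top: "N < n \<Longrightarrow> rev [N+1..<n+1] = n # rev [N+1..<n]"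
  by simp

lemma S_decomp:
  assumes s: "s \<in> perms n" and C': "C' \<in> comps (n - m)" and m: "1 \<le> m" "m \<le> n"
    and k: "1 \<le> k" "k \<le> n" and N: "N = n - k"
    and sc: "SC s = C' @ [m]" and top: "filter (\<lambda>x. N < x) s = rev [N+1..<n+1]"
  shows "s = take (n - m) s @ n # drop (Suc (n - m)) s"
    and "filter (\<lambda>x. N < x) (take (n - m) s) = []"
    and "filter (\<lambda>x. N < x) (drop (Suc (n - m)) s) = rev [N+1..<n]"
    and "SC (take (n - m) s) = C'"
    and "length (take (n - m) s) = n - m" "length (drop (Suc (n - m)) s) = m - 1"
proof -
  let ?q = "n - m"
  let ?a = "take ?q s" and ?g = "drop (Suc ?q) s"
  have d: "distinct s" "set s = {1..n}" using s by (auto simp: perms_def)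
  have ls: "length s = n" using perms_length[OF s] .
  have sq: "s ! ?q = n" using pos_max[OF s C' m sc] .
  show e: "s = ?a @ n # ?g"
    using id_take_nth_drop[of ?q s] sq ls m by simp
  show "length ?a = ?q" "length ?g = m - 1" using ls m by auto
  have ds: "distinct (?a @ n # ?g)" using d(1) e by metis
  then have na: "n \<notin> set ?a" by simp
  have "filter (\<lambda>x. N < x) (?a @ n # ?g) = rev [N+1..<n+1]" using top e by metis
  then have f: "filter (\<lambda>x. N < x) ?a @ n # filter (\<lambda>x. N < x) ?g = n # rev [N+1..<n]"
    using k N by simp
  show fa: "filter (\<lambda>x. N < x) ?a = []"
  proof (cases "filter (\<lambda>x. N < x) ?a")
    case (Cons b bs)
    then have "b = n" using f by simp
    moreover have "b \<in> set ?a" using Cons filter_is_subset by (metis list.set_intros(1) subsetD)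
    ultimately show ?thesis using na by simp
  qed simp
  show "filter (\<lambda>x. N < x) ?g = rev [N+1..<n]" using f fa by simp
  have sa: "\<forall>a\<in>set ?a. a < n" "\<forall>c\<in>set ?g. c < n"
  proof -
    have c1: "set ?a \<subseteq> {1..n}" "set ?g \<subseteq> {1..n}" using d(2) by (auto dest: in_set_takeD in_set_dropD)
    have c2: "n \<notin> set ?g" using ds by simp
    note cc = c1 c2
    show "\<forall>a\<in>set ?a. a < n"
    proof
      fix a assume "a \<in> set ?a"
      then have "a \<in> {1..n}" "a \<noteq> n" using cc na by auto
      then show "a < n" by simp
    qed
    show "\<forall>c\<in>set ?g. c < n"
    proof
      fix a assume "a \<in> set ?g"
      then have "a \<in> {1..n}" "a \<noteq> n" using cc by auto
      then show "a < n" by simp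
    qed
  qed
  have "SC (?a @ n # ?g) = SC ?a @ [Suc (length ?g)]" using SC_append_max[OF ds sa] .
  then have "SC ?a @ [Suc (length ?g)] = C' @ [m]" using sc e by metis
  then show "SC ?a = C'" by simp
qed

lemma S_empty:
  assumes C': "C' \<in> comps (n - m)" and m: "1 \<le> m" "m \<le> n"
    and k: "1 \<le> k" "k \<le> n" "m < k" and N: "N = n - k"
  shows "{s \<in> perms n. SC s = C' @ [m] \<and> filter (\<lambda>x. N < x) s = rev [N+1..<n+1]} = {}"
proof (rule ccontr)
  assume "\<not> ?thesis"
  then obtain s where s: "s \<in> perms n" "SC s = C' @ [m]" "filter (\<lambda>x. N < x) s = rev [N+1..<n+1]" by blast
  note D = S_decomp[OF s(1) C' m k(1,2) N s(2,3)]
  have "length (filter (\<lambda>x. N < x) (drop (Suc (n - m)) s)) \<le> length (drop (Suc (n - m)) s)"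
    by (rule length_filter_le)
  then have "n - (N+1) \<le> m - 1" using D(3) D(6) by simp
  then show False using k N m by simp
qed

lemma count_bij:
  fixes g :: "nat list \<Rightarrow> 'a::comm_semiring_1"
  assumes k: "1 \<le> k" "k \<le> m" and m: "m \<le> n" and C': "C' \<in> comps (n - m)" and N: "N = n - k"
  shows "(\<Sum>\<sigma> \<in> {s \<in> perms n. SC s = C' @ [m] \<and> filter (\<lambda>x. N < x) s = rev [N+1..<n+1]}. g (filter (\<lambda>x. x \<le> N) \<sigma>))
        = of_nat ((m - 1) choose (k - 1)) * (\<Sum>\<rho> \<in> {r \<in> perms N. SC (take (n - m) r) = C'}. g \<rho>)"
proof -
  define q where "q = n - m"
  define tops where "tops = rev [N+1..<n]"
  define S where "S = {s \<in> perms n. SC s = C' @ [m] \<and> filter (\<lambda>x. N < x) s = rev [N+1..<n+1]}"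
  define R where "R = {r \<in> perms N. SC (take q r) = C'}"
  define Dom where "Dom = Sigma R (\<lambda>r. shuffles (drop q r) tops)"
  define Phi where "Phi = (\<lambda>(r :: nat list, c :: nat list). take q r @ n # c)"
  define Psi where "Psi = (\<lambda>s :: nat list. (filter (\<lambda>x. x \<le> N) s, drop (Suc q) s))"
  have qN: "q \<le> N" using k m N q_def by simp
  have Nn: "N < n" using k m N by simp
  have m1: "1 \<le> m" using k by simp
  have stops: "set tops = {N+1..<n}" "distinct tops" unfolding tops_def by auto
  have ltops: "length tops = k - 1" unfolding tops_def using N k m by simp
  have domfacts: "\<rho> \<in> perms N \<and> SC (take q \<rho>) = C' \<and> distinct \<gamma> \<and> set \<gamma> = set (drop q \<rho>) \<union> {N+1..<n}
      \<and> length \<gamma> = m - 1 \<and> filter (\<lambda>x. x \<le> N) \<gamma> = drop q \<rho> \<and> filter (\<lambda>x. N < x) \<gamma> = tops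
      \<and> distinct \<rho> \<and> set \<rho> = {1..N} \<and> length \<rho> = N"
    if "(\<rho>, \<gamma>) \<in> Dom" for \<rho> \<gamma>
  proof -
    have r: "\<rho> \<in> perms N" "SC (take q \<rho>) = C'" "\<gamma> \<in> shuffles (drop q \<rho>) tops"
      using that unfolding Dom_def R_def by auto
    have dr: "distinct \<rho>" "set \<rho> = {1..N}" using r(1) by (auto simp: perms_def)
    have lr: "length \<rho> = N" using perms_length[OF r(1)] .
    have sd: "set (drop q \<rho>) \<subseteq> {1..N}" using dr by (auto dest: in_set_dropD)
    have disj: "set (drop q \<rho>) \<inter> set tops = {}" using sd stops by auto
    have dg: "distinct \<gamma>" using distinct_disjoint_shuffles[OF _ stops(2) disj r(3)] dr by simp
    have sg: "set \<gamma> = set (drop q \<rho>) \<union> {N+1..<n}" using set_shuffles[OF r(3)] stops by simp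
    have lg: "length \<gamma> = m - 1" using length_shuffles[OF r(3)] lr ltops q_def k m N by simp
    have f1: "filter (\<lambda>x. x \<in> set (drop q \<rho>)) \<gamma> = drop q \<rho>" using filter_shuffles_disjoint1(1)[OF disj r(3)] .
    have f2: "filter (\<lambda>x. x \<notin> set (drop q \<rho>)) \<gamma> = tops" using filter_shuffles_disjoint1(2)[OF disj r(3)] .
    have "filter (\<lambda>x. x \<le> N) \<gamma> = filter (\<lambda>x. x \<in> set (drop q \<rho>)) \<gamma>"
      by (rule filter_cong) (use sg sd in auto)
    moreover have "filter (\<lambda>x. N < x) \<gamma> = filter (\<lambda>x. x \<notin> set (drop q \<rho>)) \<gamma>"
      by (rule filter_cong) (use sg sd in auto)
    ultimately show ?thesis using r dg sg lg f1 f2 dr lr by simp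
  qed
  have A: "\<forall>x\<in>Dom. Psi (Phi x) = x"
  proof
    fix x assume x: "x \<in> Dom"
    obtain \<rho> \<gamma> where x': "x = (\<rho>, \<gamma>)" by (cases x)
    note F = domfacts[OF x[unfolded x']]
    have t: "filter (\<lambda>x. x \<le> N) (take q \<rho>) = take q \<rho>"
      using F by (auto intro!: filter_True dest: in_set_takeD)
    have "filter (\<lambda>x. x \<le> N) (take q \<rho> @ n # \<gamma>) = take q \<rho> @ drop q \<rho>"
      using t F Nn by simp
    moreover have "drop (Suc q) (take q \<rho> @ n # \<gamma>) = \<gamma>" using F qN by simp
    ultimately show "Psi (Phi x) = x" unfolding Psi_def Phi_def x' by simp
  qed
  have B: "Phi ` Dom \<subseteq> S"
  proof
    fix y assume "y \<in> Phi ` Dom"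
    then obtain \<rho> \<gamma> where x: "(\<rho>, \<gamma>) \<in> Dom" and y: "y = take q \<rho> @ n # \<gamma>" unfolding Phi_def by auto
    note F = domfacts[OF x]
    have st: "set (take q \<rho>) \<subseteq> {1..N}" using F by (auto dest: in_set_takeD)
    have dj: "set (take q \<rho>) \<inter> set (drop q \<rho>) = {}"
      using F set_take_disj_set_drop_if_distinct by blast
    have sdr: "set (drop q \<rho>) \<subseteq> {1..N}" using F by (auto dest: in_set_dropD)
    have "n \<notin> set (drop q \<rho>)" "n \<notin> set (take q \<rho>)" using sdr st Nn by auto
    then have dy: "distinct y" unfolding y using F st dj Nn by auto
    have "set (take q \<rho>) \<union> set (drop q \<rho>) = {1..N}" using F by (metis append_take_drop_id set_append)
    note tu = this
    have "set y = (set (take q \<rho>) \<union> set (drop q \<rho>)) \<union> {N+1..<n} \<union> {n}" unfolding y using F by auto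
    also have "\<dots> = {1..n}" unfolding tu using Nn by auto
    finally have sy: "set y = {1..n}" .
    have "SC y = SC (take q \<rho>) @ [Suc (length \<gamma>)]" unfolding y
      by (rule SC_append_max) (use dy[unfolded y] st sdr F Nn in auto)
    then have scy: "SC y = C' @ [m]" using F m1 by simp
    have "filter (\<lambda>x. N < x) (take q \<rho>) = []" using st by (auto simp: filter_empty_conv)
    then have "filter (\<lambda>x. N < x) y = n # tops" unfolding y using F Nn by simp
    then have "filter (\<lambda>x. N < x) y = rev [N+1..<n+1]" using Nn unfolding tops_def by simp
    then show "y \<in> S" unfolding S_def perms_def using dy sy scy by simp
  qed
  have C: "\<forall>s\<in>S. Phi (Psi s) = s \<and> Psi s \<in> Dom"
  proof
    fix s assume s: "s \<in> S"
    then have s1: "s \<in> perms n" "SC s = C' @ [m]" "filter (\<lambda>x. N < x) s = rev [N+1..<n+1]"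
      unfolding S_def by auto
    have kn: "1 \<le> k" "k \<le> n" using k m by auto
    note D = S_decomp[OF s1(1) C' m1 m kn N s1(2,3)]
    note D = D[folded q_def]
    let ?a = "take q s" and ?g = "drop (Suc q) s"
    have fa: "filter (\<lambda>x. x \<le> N) ?a = ?a" using D(2) by (simp add: filter_empty_conv filter_id_conv not_less)
    have fs: "filter (\<lambda>x. x \<le> N) s = ?a @ filter (\<lambda>x. x \<le> N) ?g"
      using D(1) fa Nn by (metis filter.simps(2) filter_append not_less)
    have tk: "take q (filter (\<lambda>x. x \<le> N) s) = ?a" using fs D(5) by simp
    have dp: "drop q (filter (\<lambda>x. x \<le> N) s) = filter (\<lambda>x. x \<le> N) ?g" using fs D(5) by simp
    have "Phi (Psi s) = take q (filter (\<lambda>x. x \<le> N) s) @ n # ?g" unfolding Phi_def Psi_def by simp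
    also have "\<dots> = s" using tk D(1) by simp
    finally have e1: "Phi (Psi s) = s" .
    have rp: "filter (\<lambda>x. x \<le> N) s \<in> perms N" using filter_perms[OF s1(1)] k m N by simp
    have "?g \<in> shuffles (filter (\<lambda>x. x \<le> N) ?g) (filter (\<lambda>x. \<not> x \<le> N) ?g)"
      by (rule partition_in_shuffles)
    moreover have "filter (\<lambda>x. \<not> x \<le> N) ?g = tops" using D(3) unfolding tops_def by (simp add: not_le)
    ultimately have "?g \<in> shuffles (drop q (filter (\<lambda>x. x \<le> N) s)) tops" using dp by simp
    then have "Psi s \<in> Dom" unfolding Psi_def Dom_def R_def using rp tk D(4) by simp
    then show "Phi (Psi s) = s \<and> Psi s \<in> Dom" using e1 by simp
  qed
  have bij: "bij_betw Phi Dom S"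
    by (rule bij_betw_byWitness[where f' = Psi]) (use A B C in auto)
  have "(\<Sum>\<sigma>\<in>S. g (filter (\<lambda>x. x \<le> N) \<sigma>)) = (\<Sum>x\<in>Dom. g (filter (\<lambda>x. x \<le> N) (Phi x)))"
    using sum.reindex_bij_betw[OF bij, of "\<lambda>\<sigma>. g (filter (\<lambda>x. x \<le> N) \<sigma>)"] by simp
  also have "\<dots> = (\<Sum>x\<in>Dom. g (fst x))"
  proof (rule sum.cong[OF refl])
    fix x assume "x \<in> Dom"
    then have "Psi (Phi x) = x" using A by blast
    then show "g (filter (\<lambda>x. x \<le> N) (Phi x)) = g (fst x)" unfolding Psi_def
      by (metis fst_conv)
  qed
  also have "\<dots> = (\<Sum>r\<in>R. \<Sum>c\<in>shuffles (drop q r) tops. g r)"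
    unfolding Dom_def
    by (subst sum.Sigma) (auto simp: R_def prod.case_eq_if intro: finite_subset[OF _ finite_perms])
  also have "\<dots> = (\<Sum>r\<in>R. of_nat ((m - 1) choose (k - 1)) * g r)"
  proof (rule sum.cong[OF refl])
    fix r assume r: "r \<in> R"
    then have rp: "r \<in> perms N" unfolding R_def by simp
    have dr: "distinct r" "set r = {1..N}" using rp by (auto simp: perms_def)
    have lr: "length r = N" using perms_length[OF rp] .
    have disj: "set (drop q r) \<inter> set tops = {}" using dr stops by (auto dest: in_set_dropD)
    have "card (shuffles (drop q r) tops) = (length (drop q r) + length tops) choose length (drop q r)"
      by (rule card_shuffles) (use dr stops disj in auto)
    also have "\<dots> = (m - 1) choose (m - k)" using lr ltops q_def N k m by simp
    also have "\<dots> = (m - 1) choose (k - 1)" using binomial_symmetric[of "k - 1" "m - 1"] k by simp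
    finally show "(\<Sum>c\<in>shuffles (drop q r) tops. g r) = of_nat ((m - 1) choose (k - 1)) * g r" by simp
  qed
  finally show ?thesis unfolding S_def R_def q_def by (simp add: sum_distrib_left)
qed



lemma sum_replicate1[simp]: "sum_list (replicate k (Suc 0)) = k"
  by (simp add: sum_list_replicate)

lemma U_sum:
  assumes J: "J \<in> comps n"
  shows "(\<Sum>K\<in>comps n. Ucoeff J K * f K) = (\<Sum>\<sigma>\<in>{s \<in> perms n. SC s = conjc J}. f (RC \<sigma>))"
proof -
  let ?P = "{s \<in> perms n. SC s = conjc J}"
  have sJ: "sum_list J = n" using J by (simp add: comps_def)
  have fP: "finite ?P" using finite_perms by simp
  have img: "RC ` ?P \<subseteq> comps n" using RC_props by auto
  have "(\<Sum>\<sigma>\<in>?P. f (RC \<sigma>)) = (\<Sum>K\<in>comps n. \<Sum>\<sigma>\<in>{x. x \<in> ?P \<and> RC x = K}. f (RC \<sigma>))"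
    by (rule sum.group[symmetric, OF fP finite_comps img])
  also have "\<dots> = (\<Sum>K\<in>comps n. Ucoeff J K * f K)"
  proof (rule sum.cong[OF refl])
    fix K assume "K \<in> comps n"
    have "(\<Sum>\<sigma>\<in>{x. x \<in> ?P \<and> RC x = K}. f (RC \<sigma>)) = (\<Sum>\<sigma>\<in>{x. x \<in> ?P \<and> RC x = K}. f K)"
      by (rule sum.cong) auto
    also have "\<dots> = of_nat (card {x. x \<in> ?P \<and> RC x = K}) * f K" by simp
    also have "{x. x \<in> ?P \<and> RC x = K} = {s \<in> perms (sum_list J). SC s = conjc J \<and> RC s = K}"
      using sJ by auto
    finally show "(\<Sum>\<sigma>\<in>{x. x \<in> ?P \<and> RC x = K}. f (RC \<sigma>)) = Ucoeff J K * f K"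
      by (simp add: Ucoeff_def sJ)
  qed
  finally show ?thesis by simp
qed

lemma finite_pairs: "finite {(I, J). is_comp I \<and> is_comp J \<and> sum_list I + sum_list J = s}"
proof -
  have "{(I, J). is_comp I \<and> is_comp J \<and> sum_list I + sum_list J = s} \<subseteq>
        (\<Union>j\<in>{0..s}. comps j) \<times> (\<Union>j\<in>{0..s}. comps j)"
    by (auto simp: comps_def)
  moreover have "finite ((\<Union>j\<in>{0..s}. comps j) \<times> (\<Union>j\<in>{0..s}. comps j))"
    using finite_comps by auto
  ultimately show ?thesis using finite_subset by blast
qed

lemma des_append_ones:
  assumes "I \<in> comps N" "I \<noteq> []" "1 \<le> k"
  shows "I @ replicate k 1 \<in> comps (N + k)" "des_set (I @ replicate k 1) = des_set I \<union> {N..<N+k}"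
proof -
  show "I @ replicate k 1 \<in> comps (N + k)" using assms by (auto simp: comps_def is_comp_def)
  have sI: "sum_list I = N" using assms by (simp add: comps_def)
  have "replicate k (1::nat) \<noteq> []" using assms by simp
  then have "des_set (I @ replicate k 1) = des_set I \<union> insert N ((+) N ` {1..<k})"
    using des_set_append[OF assms(2)] sI des_set_replicate1 by simp
  also have "insert N ((+) N ` {1..<k}) = {N..<N+k}"
    using assms(3) by (auto simp: image_iff)
  finally show "des_set (I @ replicate k 1) = des_set I \<union> {N..<N+k}" .
qed

lemma des_near_ones:
  assumes "I \<in> comps N" "I \<noteq> []" "1 \<le> k"
  shows "near_concat I (replicate k 1) \<in> comps (N + k)"
    "des_set (near_concat I (replicate k 1)) = des_set I \<union> {N+1..<N+k}"
proof -
  have sI: "sum_list I = N" "is_comp I" using assms by (auto simp: comps_def)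
  obtain I0 x where I: "I = I0 @ [x]" using assms(2) by (metis append_butlast_last_id)
  have nc: "near_concat I (replicate k 1) = (I0 @ [x + 1]) @ replicate (k - 1) 1"
    using assms I by (cases k) (auto simp: near_concat_def)
  have c1: "I0 @ [x + 1] \<in> comps (N + 1)" using sI I by (auto simp: comps_def is_comp_def)
  have d1: "des_set (I0 @ [x + 1]) = des_set I"
    unfolding I by (cases "I0 = []") (simp_all add: des_set_snoc)
  show "near_concat I (replicate k 1) \<in> comps (N + k)"
    using c1 assms(3) unfolding nc by (auto simp: comps_def is_comp_def)
  show "des_set (near_concat I (replicate k 1)) = des_set I \<union> {N+1..<N+k}"
  proof (cases "k = 1")
    case True then show ?thesis unfolding nc using d1 by simp
  next
    case False
    then have "des_set ((I0 @ [x + 1]) @ replicate (k - 1) 1) = des_set I \<union> {N+1..<N+1+(k-1)}"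
      using des_append_ones(2)[OF c1 _, of "k - 1"] d1 assms(3) by simp
    then show ?thesis unfolding nc using assms(3) by simp
  qed
qed

lemma split_des1:
  fixes D E :: "nat set"
  assumes "D \<subseteq> {1..<n}" "D \<inter> {1..<N} = E" "{N+1..<n} \<subseteq> D" "N \<in> D"
  shows "D = E \<union> {N..<n}"
proof (intro Set.set_eqI iffI)
  fix x assume x: "x \<in> D"
  show "x \<in> E \<union> {N..<n}"
  proof (cases "x < N")
    case True then show ?thesis using x assms(1,2) by auto
  next
    case False then show ?thesis using x assms(1) by auto
  qed
next
  fix x assume x: "x \<in> E \<union> {N..<n}"
  show "x \<in> D"
  proof (cases "x \<in> E")
    case True then show ?thesis using assms(2) by auto
  next
    case False
    then have "x = N \<or> x \<in> {N+1..<n}" using x by auto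
    then show ?thesis using assms(3,4) by auto
  qed
qed

lemma split_des2:
  fixes D E :: "nat set"
  assumes "D \<subseteq> {1..<n}" "D \<inter> {1..<N} = E" "{N+1..<n} \<subseteq> D" "N \<notin> D"
  shows "D = E \<union> {N+1..<n}"
proof (intro Set.set_eqI iffI)
  fix x assume x: "x \<in> D"
  show "x \<in> E \<union> {N+1..<n}"
  proof (cases "x < N")
    case True then show ?thesis using x assms(1,2) by auto
  next
    case False then have "x \<noteq> N" using x assms(4) by auto
    then show ?thesis using x assms(1) False by auto
  qed
next
  fix x assume x: "x \<in> E \<union> {N+1..<n}"
  then show "x \<in> D" using assms(2,3) by auto
qed

lemma symmult_R1:
  assumes k: "1 \<le> k" and a0: "\<forall>A. A \<notin> comps N \<longrightarrow> a A = 0" and n: "n = N + k"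
  shows "symmult a (R (replicate k 1)) K =
    (if K \<in> comps n \<and> {N+1..<n} \<subseteq> des_set K then a (comp_of_des N (des_set K \<inter> {1..<N})) else 0)"
proof -
  let ?ones = "replicate k (1::nat)"
  let ?P = "{(I, J). is_comp I \<and> is_comp J \<and> sum_list I + sum_list J = sum_list K}"
  let ?h = "\<lambda>(I, J). a I * R ?ones J * rmult I J K"
  have "symmult a (R ?ones) K = sum ?h ?P" unfolding symmult_def by simp
  also have "\<dots> = sum ?h (?P \<inter> (comps N \<times> {?ones}))"
    by (rule sum.mono_neutral_right[OF finite_pairs]) (use a0 in \<open>auto simp: R_def\<close>)
  also have "?P \<inter> (comps N \<times> {?ones}) = (if sum_list K = n then comps N \<times> {?ones} else {})"
    using n by (auto simp: comps_def is_comp_def)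
  finally have e0: "symmult a (R ?ones) K = (if sum_list K = n then sum ?h (comps N \<times> {?ones}) else 0)"
    by simp
  have "sum ?h (comps N \<times> {?ones}) = (\<Sum>I\<in>comps N. a I * rmult I ?ones K)"
    by (simp add: sum.cartesian_product' R_def)
  then have e1: "symmult a (R ?ones) K = (if sum_list K = n then (\<Sum>I\<in>comps N. a I * rmult I ?ones K) else 0)"
    using e0 by simp
  define A0 where "A0 = comp_of_des N (des_set K \<inter> {1..<N})"
  have A0: "A0 \<in> comps N" "des_set A0 = des_set K \<inter> {1..<N}" unfolding A0_def
    using comp_of_des[of "des_set K \<inter> {1..<N}" N] by auto
  let ?cond = "K \<in> comps n \<and> {N+1..<n} \<subseteq> des_set K"
  show ?thesis
  proof (cases "N = 0")
    case True
    have "(\<Sum>I\<in>comps N. a I * rmult I ?ones K) = a [] * R ?ones K"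
      using True by (simp add: rmult_def)
    moreover have "R ?ones K = (if ?cond then 1 else 0)"
    proof -
      have o: "?ones \<in> comps n" "des_set ?ones = {1..<n}" using True n
        by (auto simp: comps_def is_comp_def des_set_replicate1)
      have "K = ?ones \<longleftrightarrow> ?cond"
      proof
        assume "?cond"
        then have "des_set K = {1..<n}" using des_set_sub[of K] True by (auto simp: comps_def)
        then show "K = ?ones" using comps_eqI[of K n ?ones] o \<open>?cond\<close> by simp
      qed (use o True in auto)
      then show ?thesis by (auto simp: R_def)
    qed
    moreover have "A0 = []" using A0 True by simp
    moreover have "sum_list K \<noteq> n \<Longrightarrow> \<not> ?cond" by (auto simp: comps_def)
    ultimately show ?thesis using e1 unfolding A0_def[symmetric]
      by (cases "sum_list K = n") (simp_all only: if_True if_False mult_1_right mult_0_right, auto)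
  next
    case False
    have key: "rmult I ?ones K = (if ?cond \<and> I = A0 then 1 else 0)" if I: "I \<in> comps N" for I
    proof -
      have Ine: "I \<noteq> []" using I False by (auto simp: comps_def)
      have rm: "rmult I ?ones K = R (I @ ?ones) K + R (near_concat I ?ones) K"
        using Ine k by (simp add: rmult_def)
      note c1 = des_append_ones[OF I Ine k, folded n]
      note c2 = des_near_ones[OF I Ine k, folded n]
      have dI: "des_set I \<subseteq> {1..<N}" using des_set_sub[of I] I by (auto simp: comps_def)
      have Nd1: "N \<in> des_set (I @ ?ones)" using c1 n k False by simp
      have Nd2: "N \<notin> des_set (near_concat I ?ones)" using c2 dI by auto
      have ne: "I @ ?ones \<noteq> near_concat I ?ones" using Nd1 Nd2 by auto
      show ?thesis
      proof (cases "K = I @ ?ones \<or> K = near_concat I ?ones")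
        case True
        have "?cond" using True c1 c2 by auto
        moreover have "des_set K \<inter> {1..<N} = des_set I" using True c1 c2 dI by auto
        then have "I = A0" using comps_eqI[OF I A0(1)] A0 by simp
        ultimately show ?thesis using rm True ne by (auto simp: R_def)
      next
        case nT: False
        have "\<not> (?cond \<and> I = A0)"
        proof
          assume h: "?cond \<and> I = A0"
          have dK: "des_set K \<subseteq> {1..<n}" using h des_set_sub[of K] by (auto simp: comps_def)
          have dK2: "des_set K \<inter> {1..<N} = des_set I" using h A0 by simp
          show False
          proof (cases "N \<in> des_set K")
            case True
            have "des_set K = des_set I \<union> {N..<n}" by (rule split_des1) (use dK dK2 h True in auto)
            then have "K = I @ ?ones" using comps_eqI[of K n "I @ ?ones"] h c1 by simp
            then show False using nT by simp
          next
            case False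
            have "des_set K = des_set I \<union> {N+1..<n}" by (rule split_des2) (use dK dK2 h False in auto)
            then have "K = near_concat I ?ones" using comps_eqI[of K n "near_concat I ?ones"] h c2 by simp
            then show False using nT by simp
          qed
        qed
        then show ?thesis using rm nT by (auto simp: R_def)
      qed
    qed
    have "(\<Sum>I\<in>comps N. a I * rmult I ?ones K) = (\<Sum>I\<in>comps N. if I = A0 then (if ?cond then a I else 0) else 0)"
    proof (rule sum.cong[OF refl])
      fix I assume I: "I \<in> comps N"
      show "a I * rmult I ?ones K = (if I = A0 then (if ?cond then a I else 0) else 0)"
        using key[OF I] by simp
    qed
    also have "\<dots> = (if ?cond then a A0 else 0)" using A0(1) finite_comps by (simp add: sum.delta')
    finally show ?thesis using e1 by (auto simp: A0_def comps_def)
  qed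
qed



definition dualP :: "nat \<Rightarrow> nat list \<Rightarrow> (nat list \<Rightarrow> rat) \<Rightarrow> bool" where
  "dualP n J x \<longleftrightarrow> (\<forall>K. K \<notin> comps n \<longrightarrow> x K = 0) \<and>
     (\<forall>J' \<in> comps n. (\<Sum>K \<in> comps n. Ucoeff J' K * x K) = (if J' = J then 1 else 0))"

lemma V_eq: "V J = (THE x. dualP (sum_list J) J x)"
  by (simp add: V_def dualP_def)

lemma mat_prod_sum:
  fixes A B :: "rat mat"
  assumes "A \<in> carrier_mat M M" "B \<in> carrier_mat M M" "i < M" "j < M"
  shows "(A * B) $$ (i, j) = (\<Sum>l\<in>{0..<M}. A $$ (i, l) * B $$ (l, j))"
  using assms by (simp add: scalar_prod_def)

lemma homog:
  assumes ex: "\<forall>J\<in>comps n. \<exists>w. dualP n J w"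
    and x0: "\<forall>K. K \<notin> comps n \<longrightarrow> x K = 0"
    and x1: "\<forall>J\<in>comps n. (\<Sum>K\<in>comps n. Ucoeff J K * x K) = 0"
  shows "x K = 0"
proof (cases "K \<in> comps n")
  case False then show ?thesis using x0 by simp
next
  case True
  define M where "M = card (comps n)"
  obtain e where e: "bij_betw e {0..<M} (comps n)"
    using ex_bij_betw_nat_finite[OF finite_comps] unfolding M_def by blast
  define w where "w J = (SOME w. dualP n J w)" for J
  have w: "dualP n J (w J)" if "J \<in> comps n" for J
    using ex that unfolding w_def by (metis someI_ex)
  have ein: "e i \<in> comps n" if "i < M" for i using e that by (auto dest: bij_betwE)
  have einj: "e i = e j \<longleftrightarrow> i = j" if "i < M" "j < M" for i j
    using e that by (auto simp: bij_betw_def inj_on_def)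
  have reidx: "(\<Sum>l\<in>{0..<M}. h (e l)) = (\<Sum>K\<in>comps n. h K)" for h :: "nat list \<Rightarrow> rat"
    using sum.reindex_bij_betw[OF e] .
  define Um :: "rat mat" where "Um = mat M M (\<lambda>(i, j). Ucoeff (e i) (e j))"
  define Wm :: "rat mat" where "Wm = mat M M (\<lambda>(i, j). w (e j) (e i))"
  have cU: "Um \<in> carrier_mat M M" and cW: "Wm \<in> carrier_mat M M" unfolding Um_def Wm_def by auto
  have UW: "Um * Wm = 1\<^sub>m M"
  proof (rule eq_matI)
    fix i j assume ij: "i < dim_row (1\<^sub>m M :: rat mat)" "j < dim_col (1\<^sub>m M :: rat mat)"
    then have ij': "i < M" "j < M" by auto
    have "(Um * Wm) $$ (i, j) = (\<Sum>l\<in>{0..<M}. Ucoeff (e i) (e l) * w (e j) (e l))"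
      using mat_prod_sum[OF cU cW ij'] ij' unfolding Um_def Wm_def by simp
    also have "\<dots> = (\<Sum>K\<in>comps n. Ucoeff (e i) K * w (e j) K)"
      using reidx[of "\<lambda>K. Ucoeff (e i) K * w (e j) K"] by simp
    also have "\<dots> = (if e i = e j then 1 else 0)"
      using w[OF ein[OF ij'(2)]] ein[OF ij'(1)] unfolding dualP_def by blast
    also have "\<dots> = 1\<^sub>m M $$ (i, j)" using einj[OF ij'] ij' by simp
    finally show "(Um * Wm) $$ (i, j) = 1\<^sub>m M $$ (i, j)" .
  qed (use cU cW in auto)
  have WU: "Wm * Um = 1\<^sub>m M" by (rule mat_mult_left_right_inverse[OF cU cW UW])
  have "K \<in> e ` {0..<M}" using e True by (simp add: bij_betw_def)
  then obtain i where i: "i < M" "e i = K" by auto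
  have zero: "(\<Sum>j\<in>{0..<M}. Um $$ (l, j) * x (e j)) = 0" if l: "l < M" for l
  proof -
    have "(\<Sum>j\<in>{0..<M}. Um $$ (l, j) * x (e j)) = (\<Sum>j\<in>{0..<M}. Ucoeff (e l) (e j) * x (e j))"
      using l unfolding Um_def by simp
    also have "\<dots> = (\<Sum>K\<in>comps n. Ucoeff (e l) K * x K)"
      using reidx[of "\<lambda>K. Ucoeff (e l) K * x K"] by simp
    also have "\<dots> = 0" using x1 ein[OF l] by simp
    finally show ?thesis .
  qed
  have "(\<Sum>j\<in>{0..<M}. (1\<^sub>m M :: rat mat) $$ (i, j) * x (e j)) = (\<Sum>j\<in>{0..<M}. if i = j then x (e j) else 0)"
    by (rule sum.cong) (use i(1) in auto)
  also have "\<dots> = x (e i)" using i(1) by simp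
  finally have "x (e i) = (\<Sum>j\<in>{0..<M}. (1\<^sub>m M :: rat mat) $$ (i, j) * x (e j))" by simp
  also have "\<dots> = (\<Sum>j\<in>{0..<M}. (\<Sum>l\<in>{0..<M}. Wm $$ (i, l) * Um $$ (l, j)) * x (e j))"
    using mat_prod_sum[OF cW cU i(1)] WU[symmetric] by (intro sum.cong refl) simp
  also have "\<dots> = (\<Sum>j\<in>{0..<M}. \<Sum>l\<in>{0..<M}. Wm $$ (i, l) * Um $$ (l, j) * x (e j))"
    by (simp only: sum_distrib_right)
  also have "\<dots> = (\<Sum>l\<in>{0..<M}. \<Sum>j\<in>{0..<M}. Wm $$ (i, l) * Um $$ (l, j) * x (e j))"
    by (rule sum.swap)
  also have "\<dots> = (\<Sum>l\<in>{0..<M}. Wm $$ (i, l) * (\<Sum>j\<in>{0..<M}. Um $$ (l, j) * x (e j)))"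
    by (simp only: sum_distrib_left mult.assoc)
  also have "\<dots> = 0" using zero by simp
  finally show ?thesis using i by simp
qed

lemma dual_unique:
  assumes ex: "\<forall>J\<in>comps n. \<exists>w. dualP n J w" and x: "dualP n J x" and y: "dualP n J y"
  shows "x = y"
proof
  fix K
  have "(\<lambda>K. x K - y K) K = 0"
  proof (rule homog[OF ex])
    show "\<forall>K. K \<notin> comps n \<longrightarrow> x K - y K = 0" using x y by (simp add: dualP_def)
    show "\<forall>J'\<in>comps n. (\<Sum>K\<in>comps n. Ucoeff J' K * (x K - y K)) = 0"
    proof
      fix J' assume J': "J' \<in> comps n"
      have "(\<Sum>K\<in>comps n. Ucoeff J' K * (x K - y K)) =
          (\<Sum>K\<in>comps n. Ucoeff J' K * x K) - (\<Sum>K\<in>comps n. Ucoeff J' K * y K)"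
        by (simp add: right_diff_distrib sum_subtractf)
      then show "(\<Sum>K\<in>comps n. Ucoeff J' K * (x K - y K)) = 0" using x y J' by (simp add: dualP_def)
    qed
  qed
  then show "x K = y K" by simp
qed

lemma V_dual:
  assumes ex: "\<forall>J\<in>comps n. \<exists>w. dualP n J w" and J: "J \<in> comps n"
  shows "dualP n J (V J)" and "dualP n J x \<Longrightarrow> V J = x"
proof -
  have sJ: "sum_list J = n" using J by (simp add: comps_def)
  obtain w where w: "dualP n J w" using ex J by blast
  have the: "(THE x. dualP n J x) = w"
    by (rule the_equality[where P = "dualP n J", OF w]) (use dual_unique[OF ex _ w] in blast)
  show "dualP n J (V J)" unfolding V_eq sJ the by (rule w)
  show "dualP n J x \<Longrightarrow> V J = x" unfolding V_eq sJ the using dual_unique[OF ex w] by blast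
qed



lemma comp_last:
  assumes "C \<in> comps n" "C \<noteq> []"
  shows "C = butlast C @ [last C]" "1 \<le> last C" "last C \<le> n" "butlast C \<in> comps (n - last C)"
    "des_set (butlast C) = des_set C \<inter> {1..<n - last C}"
proof -
  show e: "C = butlast C @ [last C]" using assms(2) by simp
  have c: "is_comp C" "sum_list C = n" using assms by (auto simp: comps_def)
  have "last C \<in> set C" using assms(2) by simp
  then show "1 \<le> last C" using c by (auto simp: is_comp_def) (metis Suc_leI gr0I)
  have s: "sum_list (butlast C) + last C = n" using c e by (metis sum_list_append sum_list_simps add_0_right sum_list.Cons)
  then show "last C \<le> n" by simp
  show "butlast C \<in> comps (n - last C)" using s c e by (auto simp: comps_def is_comp_def dest: in_set_butlastD)
  show "des_set (butlast C) = des_set C \<inter> {1..<n - last C}"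
  proof (cases "butlast C = []")
    case True
    then show ?thesis using e by (metis des_set_Nil des_set_single Int_empty_left append_Nil)
  next
    case False
    have dB: "des_set (butlast C) \<subseteq> {1..<sum_list (butlast C)}"
      using des_set_sub c e by (metis is_comp_append)
    have "des_set C = insert (sum_list (butlast C)) (des_set (butlast C))"
      using des_set_snoc[OF False] e by metis
    then show ?thesis using dB s by auto
  qed
qed

lemma s6:
  assumes qN: "q \<le> N" and C': "C' \<in> comps q" and A: "A \<in> comps N" and a: "dualP N (conjc A) a"
  shows "(\<Sum>\<rho>\<in>{r \<in> perms N. SC (take q r) = C'}. a (RC \<rho>)) = (if des_set A \<inter> {1..<q} = des_set C' then 1 else 0)"
proof -
  define Pd where "Pd D \<longleftrightarrow> des_set D \<inter> {1..<q} = des_set C'" for D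
  define S where "S = {r \<in> perms N. Pd (SC r)}"
  define T where "T = {D \<in> comps N. Pd D}"
  have e1: "{r \<in> perms N. SC (take q r) = C'} = S"
  proof -
    have "SC (take q r) = C' \<longleftrightarrow> Pd (SC r)" if r: "r \<in> perms N" for r
    proof -
      have dr: "distinct r" "length r = N" using r perms_length by (auto simp: perms_def)
      have c1: "SC (take q r) \<in> comps q" using SC_comp[of "take q r"] dr qN by simp
      have "des_set (SC (take q r)) = des_set (SC r) \<inter> {..<q}" using SC_take[of r q] dr qN by simp
      moreover have "des_set (SC r) \<subseteq> {1..<N}" using SC_comp[of r] dr des_set_sub by (fastforce simp: comps_def)
      ultimately have "des_set (SC (take q r)) = des_set (SC r) \<inter> {1..<q}" by auto
      then show ?thesis using comps_eqI[OF c1 C'] unfolding Pd_def by auto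
    qed
    then show ?thesis unfolding S_def by auto
  qed
  have fS: "finite S" unfolding S_def using finite_perms by simp
  have fT: "finite T" unfolding T_def using finite_comps by simp
  have img: "SC ` S \<subseteq> T" unfolding S_def T_def using SC_comp perms_length by (fastforce simp: perms_def)
  have "(\<Sum>\<rho>\<in>S. a (RC \<rho>)) = (\<Sum>D\<in>T. \<Sum>\<rho>\<in>{x. x \<in> S \<and> SC x = D}. a (RC \<rho>))"
    by (rule sum.group[symmetric, OF fS fT img])
  also have "\<dots> = (\<Sum>D\<in>T. if D = A then 1 else 0)"
  proof (rule sum.cong[OF refl])
    fix D assume D: "D \<in> T"
    then have Dc: "D \<in> comps N" "Pd D" unfolding T_def by auto
    have cD: "conjc D \<in> comps N" "conjc (conjc D) = D" using conjc[OF Dc(1)] by auto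
    have "{x. x \<in> S \<and> SC x = D} = {s \<in> perms N. SC s = conjc (conjc D)}"
      using Dc cD unfolding S_def by auto
    then have "(\<Sum>\<rho>\<in>{x. x \<in> S \<and> SC x = D}. a (RC \<rho>)) = (\<Sum>K\<in>comps N. Ucoeff (conjc D) K * a K)"
      using U_sum[OF cD(1), of a] by simp
    also have "\<dots> = (if conjc D = conjc A then 1 else 0)" using a cD(1) unfolding dualP_def by blast
    also have "\<dots> = (if D = A then 1 else 0)" using conjc[OF A] cD by metis
    finally show "(\<Sum>\<rho>\<in>{x. x \<in> S \<and> SC x = D}. a (RC \<rho>)) = (if D = A then 1 else 0)" .
  qed
  also have "\<dots> = (if A \<in> T then 1 else 0)" using fT by (simp add: sum.delta')
  also have "\<dots> = (if des_set A \<inter> {1..<q} = des_set C' then 1 else 0)" using A unfolding T_def Pd_def by simp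
  finally show ?thesis using e1 by simp
qed

lemma T_k:
  assumes k: "1 \<le> k" "k \<le> n" and N: "N = n - k" and A: "A \<in> comps N" and a: "dualP N (conjc A) a"
    and J: "J \<in> comps n"
  shows "(\<Sum>K\<in>comps n. Ucoeff J K * symmult a (R (replicate k 1)) K) =
    (if k \<le> last (conjc J) \<and> des_set A \<inter> {1..<n - last (conjc J)} = des_set (butlast (conjc J))
     then of_nat ((last (conjc J) - 1) choose (k - 1)) else 0)"
proof -
  define C where "C = conjc J"
  define m where "m = last C"
  define C' where "C' = butlast C"
  have Cc: "C \<in> comps n" using conjc[OF J] C_def by simp
  have Cne: "C \<noteq> []" using Cc k by (auto simp: comps_def)
  note CL = comp_last[OF Cc Cne, folded m_def C'_def]
  have a0: "\<forall>A. A \<notin> comps N \<longrightarrow> a A = 0" using a by (simp add: dualP_def)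
  have nNk: "n = N + k" using N k by simp
  define f where "f K = (if {N+1..<n} \<subseteq> des_set K then a (comp_of_des N (des_set K \<inter> {1..<N})) else 0)" for K
  have "(\<Sum>K\<in>comps n. Ucoeff J K * symmult a (R (replicate k 1)) K) = (\<Sum>K\<in>comps n. Ucoeff J K * f K)"
  proof (rule sum.cong[OF refl])
    fix K assume K: "K \<in> comps n"
    have "symmult a (R (replicate k 1)) K = (if K \<in> comps n \<and> {N+1..<n} \<subseteq> des_set K
        then a (comp_of_des N (des_set K \<inter> {1..<N})) else 0)"
      by (rule symmult_R1[OF k(1) a0 nNk])
    then show "Ucoeff J K * symmult a (R (replicate k 1)) K = Ucoeff J K * f K"
      using K unfolding f_def by simp
  qed
  also have "\<dots> = (\<Sum>\<sigma>\<in>{s \<in> perms n. SC s = C}. f (RC \<sigma>))" using U_sum[OF J] C_def by simp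
  also have "\<dots> = (\<Sum>\<sigma>\<in>{s \<in> perms n. SC s = C}. if filter (\<lambda>x. N < x) \<sigma> = rev [N+1..<n+1]
                     then a (RC (filter (\<lambda>x. x \<le> N) \<sigma>)) else 0)"
  proof (rule sum.cong[OF refl])
    fix \<sigma> assume "\<sigma> \<in> {s \<in> perms n. SC s = C}"
    then have s: "\<sigma> \<in> perms n" by simp
    have d: "des_set (RC \<sigma>) = RCD \<sigma>" using RC_props[OF s] by simp
    have NN: "N \<le> n" using N by simp
    have fp: "filter (\<lambda>x. x \<le> N) \<sigma> \<in> perms N" using filter_perms[OF s NN] .
    have "comp_of_des N (RCD \<sigma> \<inter> {1..<N}) = comp_of_des N (RCD (filter (\<lambda>x. x \<le> N) \<sigma>))"
      using RCD_filter[OF s NN] by simp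
    also have "\<dots> = RC (filter (\<lambda>x. x \<le> N) \<sigma>)"
      using RC_props[OF fp] comp_of_des_des by metis
    finally have "comp_of_des N (RCD \<sigma> \<inter> {1..<N}) = RC (filter (\<lambda>x. x \<le> N) \<sigma>)" .
    then show "f (RC \<sigma>) = (if filter (\<lambda>x. N < x) \<sigma> = rev [N+1..<n+1] then a (RC (filter (\<lambda>x. x \<le> N) \<sigma>)) else 0)"
      unfolding f_def d using top_iff[OF s k N] by simp
  qed
  also have "\<dots> = (\<Sum>\<sigma>\<in>{s \<in> perms n. SC s = C' @ [m] \<and> filter (\<lambda>x. N < x) s = rev [N+1..<n+1]}.
                    a (RC (filter (\<lambda>x. x \<le> N) \<sigma>)))"
  proof -
    let ?P = "{s \<in> perms n. SC s = C}"
    let ?Q = "\<lambda>\<sigma>. filter (\<lambda>x. N < x) \<sigma> = rev [N+1..<n+1]"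
    let ?g = "\<lambda>\<sigma>. a (RC (filter (\<lambda>x. x \<le> N) \<sigma>))"
    have fin: "finite ?P" using finite_perms by simp
    have "(\<Sum>\<sigma>\<in>?P. if ?Q \<sigma> then ?g \<sigma> else 0) = sum ?g {\<sigma> \<in> ?P. ?Q \<sigma>}"
      by (rule sum.inter_filter[symmetric, OF fin])
    also have "{\<sigma> \<in> ?P. ?Q \<sigma>} = {s \<in> perms n. SC s = C' @ [m] \<and> ?Q s}"
      unfolding CL(1)[symmetric] by blast
    finally show ?thesis .
  qed
  also have "\<dots> = (if k \<le> m \<and> des_set A \<inter> {1..<n - m} = des_set C' then of_nat ((m - 1) choose (k - 1)) else 0)"
  proof (cases "k \<le> m")
    case True
    have "(\<Sum>\<sigma>\<in>{s \<in> perms n. SC s = C' @ [m] \<and> filter (\<lambda>x. N < x) s = rev [N+1..<n+1]}.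
                    a (RC (filter (\<lambda>x. x \<le> N) \<sigma>))) =
          of_nat ((m - 1) choose (k - 1)) * (\<Sum>\<rho>\<in>{r \<in> perms N. SC (take (n - m) r) = C'}. a (RC \<rho>))"
      using count_bij[OF k(1) True CL(3) CL(4) N, of "\<lambda>\<rho>. a (RC \<rho>)"] by simp
    also have "\<dots> = of_nat ((m - 1) choose (k - 1)) * (if des_set A \<inter> {1..<n - m} = des_set C' then 1 else 0)"
      using s6[of "n - m" N C' A a] True N CL(4) A a by simp
    finally show ?thesis using True by simp
  next
    case False
    have "{s \<in> perms n. SC s = C' @ [m] \<and> filter (\<lambda>x. N < x) s = rev [N+1..<n+1]} = {}"
      using S_empty[OF CL(4) CL(2) CL(3) k] False N by simp
    note E = this
    show ?thesis unfolding E using False by simp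
  qed
  finally show ?thesis unfolding m_def C'_def C_def .
qed



lemma binom_alt:
  assumes a: "1 \<le> a" "a \<le> n" and m: "1 \<le> m" "m \<le> n"
  shows "(\<Sum>k\<in>{a..n}. (-1::rat) ^ (k - a) * of_nat ((k - 1) choose (a - 1)) * of_nat ((m - 1) choose (k - 1)))
         = (if m = a then 1 else 0)"
proof -
  define h where "h k = (-1::rat) ^ (k - a) * of_nat ((k - 1) choose (a - 1)) * of_nat ((m - 1) choose (k - 1))" for k
  have van: "h k = 0" if "m < k" for k
  proof -
    have "m - 1 < k - 1" using that m by simp
    then show ?thesis unfolding h_def by (simp add: binomial_eq_0)
  qed
  show ?thesis
  proof (cases "a \<le> m")
    case False
    have "(\<Sum>k\<in>{a..n}. h k) = 0" using van False by (intro sum.neutral) auto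
    then show ?thesis using False unfolding h_def by simp
  next
    case True
    have "(\<Sum>k\<in>{a..n}. h k) = (\<Sum>k\<in>{a..m}. h k)"
      by (rule sum.mono_neutral_right) (use van m in auto)
    also have "\<dots> = (\<Sum>k\<in>{0 + a..(m - a) + a}. h k)" using True by simp
    also have "\<dots> = (\<Sum>i\<in>{0..m - a}. h (i + a))" by (rule sum.shift_bounds_cl_nat_ivl)
    also have "\<dots> = (\<Sum>i\<in>{0..m - a}. of_nat ((m - 1) choose (a - 1)) * ((-1) ^ i * of_nat ((m - a) choose i)))"
    proof (rule sum.cong[OF refl])
      fix i assume i: "i \<in> {0..m - a}"
      have "(m - 1 choose (i + a - 1)) * ((i + a - 1) choose (a - 1)) =
            (m - 1 choose (a - 1)) * ((m - 1 - (a - 1)) choose (i + a - 1 - (a - 1)))"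
        by (rule choose_mult) (use i a True in auto)
      moreover have "m - 1 - (a - 1) = m - a" "i + a - 1 - (a - 1) = i" using a True by auto
      ultimately have "((i + a - 1) choose (a - 1)) * (m - 1 choose (i + a - 1)) =
            (m - 1 choose (a - 1)) * ((m - a) choose i)" by (simp add: mult.commute)
      then have "of_nat ((i + a - 1) choose (a - 1)) * of_nat (m - 1 choose (i + a - 1)) =
            (of_nat (m - 1 choose (a - 1)) * of_nat ((m - a) choose i) :: rat)"
        by (metis of_nat_mult)
      then show "h (i + a) = of_nat ((m - 1) choose (a - 1)) * ((-1) ^ i * of_nat ((m - a) choose i))"
        unfolding h_def by (simp add: algebra_simps)
    qed
    also have "\<dots> = of_nat ((m - 1) choose (a - 1)) * (\<Sum>i\<le>m - a. (-1) ^ i * of_nat ((m - a) choose i))"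
      by (simp add: sum_distrib_left atLeast0AtMost)
    also have "\<dots> = (if m = a then 1 else 0)"
    proof (cases "m = a")
      case True then show ?thesis by simp
    next
      case False
      then have "0 < m - a" using \<open>a \<le> m\<close> by simp
      then have "(\<Sum>i\<le>m - a. (-1) ^ i * of_nat ((m - a) choose i)) = (0::rat)"
        by (rule choose_alternating_sum)
      then show ?thesis using False by simp
    qed
    finally show ?thesis unfolding h_def .
  qed
qed

lemma conjc_Nil: "conjc [] = []"
  using conjc(1)[of "[]" 0] by simp

lemma base0: "dualP 0 [] (R [])"
proof -
  have p0: "perms 0 = {[]}" by (auto simp: perms_def)
  have "SC [] = []" using SC_blocks[of "[]"] by simp
  moreover have "RC [] = []" using RC_props[of "[]" 0] p0 by simp
  ultimately have "{s \<in> perms (sum_list []). SC s = conjc [] \<and> RC s = []} = {[]}"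
    using p0 conjc_Nil by auto
  then have "Ucoeff [] [] = 1" by (simp add: Ucoeff_def)
  then show ?thesis by (auto simp: dualP_def R_def)
qed

lemma conjc_single: "1 \<le> k \<Longrightarrow> conjc [k] = replicate k 1"
proof -
  assume k: "1 \<le> k"
  have c: "[k] \<in> comps k" using k by (simp add: comps_def)
  have r: "replicate k 1 \<in> comps k" by (simp add: comps_def is_comp_def)
  show ?thesis
    by (rule comps_eqI[OF conjc(1)[OF c] r]) (simp add: conjc(2)[OF c] des_set_replicate1)
qed

lemma R1_dual:
  assumes k: "1 \<le> k"
  shows "dualP k (replicate k 1) (R (replicate k 1))"
proof -
  have r: "replicate k 1 \<in> comps k" by (simp add: comps_def is_comp_def)
  have a0: "\<forall>A. A \<notin> comps 0 \<longrightarrow> R [] A = 0" by (auto simp: R_def)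
  have pt: "R (replicate k 1) K = symmult (R []) (R (replicate k 1)) K" if K: "K \<in> comps k" for K
  proof -
    have "symmult (R []) (R (replicate k 1)) K = (if K \<in> comps k \<and> {0+1..<k} \<subseteq> des_set K
        then R [] (comp_of_des 0 (des_set K \<inter> {1..<0})) else 0)"
      by (rule symmult_R1[OF k a0]) simp
    also have "comp_of_des 0 (des_set K \<inter> {1..<0}) = []" using comp_of_des(1)[of "{}" 0] by simp
    also have "K \<in> comps k \<and> {0+1..<k} \<subseteq> des_set K \<longleftrightarrow> K = replicate k 1"
    proof
      assume h: "K \<in> comps k \<and> {0+1..<k} \<subseteq> des_set K"
      then have "des_set K = {1..<k}" using des_set_sub[of K] by (auto simp: comps_def)
      then show "K = replicate k 1" using comps_eqI[OF _ r] h by (simp add: des_set_replicate1)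
    qed (use r in \<open>auto simp: des_set_replicate1\<close>)
    finally show ?thesis by (auto simp: R_def)
  qed
  show ?thesis unfolding dualP_def
  proof (intro conjI ballI allI impI)
    fix K assume "K \<notin> comps k" then show "R (replicate k 1) K = 0" using r by (auto simp: R_def)
  next
    fix J assume J: "J \<in> comps k"
    have "(\<Sum>K\<in>comps k. Ucoeff J K * R (replicate k 1) K) = (\<Sum>K\<in>comps k. Ucoeff J K * symmult (R []) (R (replicate k 1)) K)"
      using pt by simp
    also have "\<dots> = (if k \<le> last (conjc J) \<and> des_set [] \<inter> {1..<k - last (conjc J)} = des_set (butlast (conjc J))
     then of_nat ((last (conjc J) - 1) choose (k - 1)) else 0)"
    proof -
      have prem: "(0::nat) = k - k" "[] \<in> comps 0" "dualP 0 (conjc []) (R [])"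
        using base0 conjc_Nil by simp_all
      show ?thesis by (rule T_k[OF k order.refl prem J])
    qed
    also have "\<dots> = (if J = replicate k 1 then 1 else 0)"
    proof -
      have Cc: "conjc J \<in> comps k" using conjc[OF J] by simp
      have Cne: "conjc J \<noteq> []" using Cc k by (auto simp: comps_def)
      note CL = comp_last[OF Cc Cne]
      have "k \<le> last (conjc J) \<longleftrightarrow> J = replicate k 1"
      proof
        assume "k \<le> last (conjc J)"
        then have lk: "last (conjc J) = k" using CL by simp
        then have "butlast (conjc J) = []" using CL(4) by simp
        then have "conjc J = [k]" using CL(1) lk by simp
        then show "J = replicate k 1" using conjc(3)[OF J] conjc_single[OF k] by metis
      next
        assume "J = replicate k 1"
        then have "conjc J = [k]" using conjc_single[OF k] conjc(3)[of "[k]" k] k by (simp add: comps_def)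
        then show "k \<le> last (conjc J)" by simp
      qed
      moreover have "k \<le> last (conjc J) \<Longrightarrow> des_set (butlast (conjc J)) = {}"
        using CL(3,4) by simp
      ultimately show ?thesis using CL(3) by auto
    qed
    finally show "(\<Sum>K\<in>comps k. Ucoeff J K * R (replicate k 1) K) = (if J = replicate k 1 then 1 else 0)" .
  qed
qed



definition RHSW :: "nat list \<Rightarrow> nat list \<Rightarrow> rat" where
  "RHSW I K = (\<Sum>k \<in> {last I..sum_list I}. (-1) ^ (k - last I) * of_nat ((k - 1) choose (last I - 1))
      * symmult (Vp (ribbon_prefix (sum_list I - k) I)) (R (replicate k 1)) K)"

lemma Vp_dual:
  assumes IH: "\<forall>J\<in>comps N. dualP N J (V J)" and A: "A \<in> comps N"
  shows "dualP N (conjc A) (Vp A)"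
proof (cases "A = []")
  case True
  then have "N = 0" using A by (simp add: comps_def)
  then show ?thesis using True base0 conjc_Nil by (simp add: Vp_def)
next
  case False
  then show ?thesis using IH conjc[OF A] by (simp add: Vp_def)
qed

lemma fin_iff:
  assumes I: "I \<in> comps n" "I \<noteq> []" and J: "J \<in> comps n"
  shows "(des_set I \<inter> {1..<n - last (conjc J)} = des_set (butlast (conjc J)) \<and> last (conjc J) = last I)
         \<longleftrightarrow> J = conjc I"
proof -
  have Cc: "conjc J \<in> comps n" using conjc[OF J] by simp
  have npos: "0 < n" using comp_sum_pos[of I] I by (simp add: comps_def)
  have Cne: "conjc J \<noteq> []" using Cc npos by (auto simp: comps_def)
  note CL = comp_last[OF Cc Cne]
  note IL = comp_last[OF I]
  show ?thesis
  proof
    assume h: "des_set I \<inter> {1..<n - last (conjc J)} = des_set (butlast (conjc J)) \<and> last (conjc J) = last I"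
    have h2: "last (conjc J) = last I" using h by simp
    have h1: "des_set I \<inter> {1..<n - last (conjc J)} = des_set (butlast (conjc J))" using h by blast
    have "des_set (butlast I) = des_set I \<inter> {1..<n - last (conjc J)}" using IL(5) h2 by metis
    then have "des_set (butlast I) = des_set (butlast (conjc J))" using h1 by (rule trans)
    then have "butlast I = butlast (conjc J)" using comps_eqI[OF IL(4)] CL(4) h by simp
    then have "I = conjc J" using IL(1) CL(1) h by metis
    then show "J = conjc I" using conjc(3)[OF J] by simp
  next
    assume "J = conjc I"
    then have "conjc J = I" using conjc(3)[OF I(1)] by simp
    then show "des_set I \<inter> {1..<n - last (conjc J)} = des_set (butlast (conjc J)) \<and> last (conjc J) = last I"
      using IL(5) by simp
  qed
qed

lemma main_dual:
  assumes IH: "\<forall>N<n. \<forall>J\<in>comps N. dualP N J (V J)" and I: "I \<in> comps n" "I \<noteq> []"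
  shows "dualP n (conjc I) (RHSW I)"
proof -
  have sI: "sum_list I = n" "is_comp I" using I by (auto simp: comps_def)
  note IL = comp_last[OF I]
  define a where "a = last I"
  have a: "1 \<le> a" "a \<le> n" using IL a_def by auto
  define A where "A k = ribbon_prefix (n - k) I" for k
  define c where "c k = ((-1) ^ (k - a) * of_nat ((k - 1) choose (a - 1)) :: rat)" for k
  define s where "s k K = symmult (Vp (A k)) (R (replicate k 1)) K" for k K
  have RW: "RHSW I K = (\<Sum>k\<in>{a..n}. c k * s k K)" for K
    unfolding RHSW_def sI(1) a_def[symmetric] c_def s_def A_def by simp
  have kk: "1 \<le> k" "k \<le> n" if "k \<in> {a..n}" for k using that a by auto
  have Ak: "A k \<in> comps (n - k)" "des_set (A k) = des_set I \<inter> {1..<n - k}" if "k \<in> {a..n}" for k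
    using ribbon_prefix_props[OF sI(2), of "n - k"] sI unfolding A_def by auto
  have dA: "dualP (n - k) (conjc (A k)) (Vp (A k))" if k: "k \<in> {a..n}" for k
  proof (rule Vp_dual[OF _ Ak(1)[OF k]])
    show "\<forall>J\<in>comps (n - k). dualP (n - k) J (V J)" using IH kk[OF k] by simp
  qed
  have sR: "s k K = (if K \<in> comps n \<and> {n - k + 1..<n} \<subseteq> des_set K
      then Vp (A k) (comp_of_des (n - k) (des_set K \<inter> {1..<n - k})) else 0)" if k: "k \<in> {a..n}" for k K
    unfolding s_def
    by (rule symmult_R1) (use kk[OF k] dA[OF k] in \<open>auto simp: dualP_def\<close>)
  show ?thesis unfolding dualP_def
  proof (intro conjI allI impI ballI)
    fix K assume K: "K \<notin> comps n"
    show "RHSW I K = 0" unfolding RW using sR K by simp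
  next
    fix J assume J: "J \<in> comps n"
    define m where "m = last (conjc J)"
    define C' where "C' = butlast (conjc J)"
    define P where "P \<longleftrightarrow> des_set I \<inter> {1..<n - m} = des_set C'"
    have Cc: "conjc J \<in> comps n" using conjc[OF J] by simp
    have npos: "0 < n" using comp_sum_pos[of I] I by (simp add: comps_def)
    have Cne: "conjc J \<noteq> []" using Cc npos by (auto simp: comps_def)
    note CL = comp_last[OF Cc Cne, folded m_def C'_def]
    have "(\<Sum>K\<in>comps n. Ucoeff J K * RHSW I K) = (\<Sum>K\<in>comps n. \<Sum>k\<in>{a..n}. Ucoeff J K * (c k * s k K))"
      unfolding RW by (simp add: sum_distrib_left)
    also have "\<dots> = (\<Sum>k\<in>{a..n}. \<Sum>K\<in>comps n. Ucoeff J K * (c k * s k K))"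
      by (rule sum.swap)
    also have "\<dots> = (\<Sum>k\<in>{a..n}. c k * (\<Sum>K\<in>comps n. Ucoeff J K * s k K))"
      by (simp add: sum_distrib_left mult.left_commute)
    also have "\<dots> = (\<Sum>k\<in>{a..n}. c k * (if P then of_nat ((m - 1) choose (k - 1)) else 0))"
    proof (rule sum.cong[OF refl])
      fix k assume k: "k \<in> {a..n}"
      have "(\<Sum>K\<in>comps n. Ucoeff J K * s k K) =
         (if k \<le> m \<and> des_set (A k) \<inter> {1..<n - m} = des_set C' then of_nat ((m - 1) choose (k - 1)) else 0)"
        unfolding s_def m_def C'_def by (rule T_k[OF kk[OF k] refl Ak(1)[OF k] dA[OF k] J])
      also have "\<dots> = (if P then of_nat ((m - 1) choose (k - 1)) else 0)"
      proof (cases "k \<le> m")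
        case True
        then have "des_set (A k) \<inter> {1..<n - m} = des_set I \<inter> {1..<n - m}" using Ak(2)[OF k] by auto
        then show ?thesis using True unfolding P_def by simp
      next
        case False
        then have "m - 1 < k - 1" using CL(2) by simp
        then show ?thesis using False by (simp add: binomial_eq_0)
      qed
      finally show "c k * (\<Sum>K\<in>comps n. Ucoeff J K * s k K) = c k * (if P then of_nat ((m - 1) choose (k - 1)) else 0)"
        by simp
    qed
    also have "\<dots> = (if P then (\<Sum>k\<in>{a..n}. (-1::rat) ^ (k - a) * of_nat ((k - 1) choose (a - 1)) * of_nat ((m - 1) choose (k - 1))) else 0)"
      unfolding c_def by simp
    also have "\<dots> = (if P \<and> m = a then 1 else 0)"
      unfolding binom_alt[OF a CL(2) CL(3)] by simp
    also have "\<dots> = (if J = conjc I then 1 else 0)"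
      using fin_iff[OF I J] unfolding P_def m_def C'_def a_def by simp
    finally show "(\<Sum>K\<in>comps n. Ucoeff J K * RHSW I K) = (if J = conjc I then 1 else 0)" .
  qed
qed

lemma allV: "\<forall>J\<in>comps n. dualP n J (V J)"
proof (induction n rule: less_induct)
  case (less n)
  have ex: "\<forall>J\<in>comps n. \<exists>w. dualP n J w"
  proof
    fix J assume J: "J \<in> comps n"
    show "\<exists>w. dualP n J w"
    proof (cases "n = 0")
      case True
      then have "J = []" using J by simp
      then show ?thesis using base0 True by blast
    next
      case False
      have Ic: "conjc J \<in> comps n" "conjc (conjc J) = J" using conjc[OF J] by auto
      have "conjc J \<noteq> []" using Ic False by (auto simp: comps_def)
      then have "dualP n (conjc (conjc J)) (RHSW (conjc J))" using main_dual[OF _ Ic(1)] less by blast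
      then show ?thesis using Ic by auto
    qed
  qed
  show ?case using V_dual(1)[OF ex] by blast
qed

lemma ex_all: "\<forall>J\<in>comps n. \<exists>w. dualP n J w"
  using allV by blast

theorem mainTheorem6:
  fixes I :: "nat list"
  assumes "is_comp I" and "I \<noteq> []"
  shows "Vp I = (\<lambda>K. \<Sum>k \<in> {last I..sum_list I}.
            (-1) ^ (k - last I) * of_nat ((k - 1) choose (last I - 1))
            * symmult (Vp (ribbon_prefix (sum_list I - k) I)) (Vp [k]) K)"
proof -
  define n where "n = sum_list I"
  have I: "I \<in> comps n" using assms by (simp add: comps_def n_def)
  have Vp1: "Vp [k] = R (replicate k 1)" if k: "1 \<le> k" for k
  proof -
    have r: "replicate k 1 \<in> comps k" by (simp add: comps_def is_comp_def)
    have "Vp [k] = V (replicate k 1)" using conjc_single[OF k] by (simp add: Vp_def)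
    also have "\<dots> = R (replicate k 1)" by (rule V_dual(2)[OF ex_all r R1_dual[OF k]])
    finally show ?thesis .
  qed
  have "Vp I = V (conjc I)" using assms by (simp add: Vp_def)
  also have "\<dots> = RHSW I"
    by (rule V_dual(2)[OF ex_all conjc(1)[OF I] main_dual[OF _ I assms(2)]]) (use allV in blast)
  also have "\<dots> = (\<lambda>K. \<Sum>k \<in> {last I..sum_list I}.
            (-1) ^ (k - last I) * of_nat ((k - 1) choose (last I - 1))
            * symmult (Vp (ribbon_prefix (sum_list I - k) I)) (Vp [k]) K)"
  proof
    fix K
    have "1 \<le> last I" using comp_last[OF I assms(2)] by simp
    then show "RHSW I K = (\<Sum>k \<in> {last I..sum_list I}.
            (-1) ^ (k - last I) * of_nat ((k - 1) choose (last I - 1))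
            * symmult (Vp (ribbon_prefix (sum_list I - k) I)) (Vp [k]) K)"
      unfolding RHSW_def by (intro sum.cong refl) (simp add: Vp1)
  qed
  finally show ?thesis .
qed


end
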